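(* Let $G$ be a finite graph with no isolated vertices. If the order of $G$ is even, then there is no nontrivial circuit injection $f:G_M\rightarrow B$ with $B$ a binary matroid if and only if $G$ is Hamiltonian. If the order of $G$ is odd, then there is no nontrivial circuit injection $f:G_M\rightarrow B$ with $B$ a binary matroid if and only if $G$ is almost Hamiltonian.
   Context: Graphs are undirected without loops or multiple edges. The order of $G$ is its number of vertices. $G_M$ is the cycle matroid of $G$: cells are the edges of $G$ and circuits are the edge sets of circuits (cycles) of $G$. A matroid is a pair $(S,\mathscr{C})$, $S\neq\emptyset$, $\mathscr{C}\subseteq 2^S$, satisfying: (I) $A,B\in\mathscr{C}$, $A\subseteq B$ implies $A=B$; (II) $A,B\in\mathscr{C}$, $a\in A\cap B$, $b\in (A\cup B)\setminus(A\cap B)$ implies there exists $D\in\mathscr{C}$ with $D\subseteq A\cup B$, $a\notin D$, $b\in D$. A matroid $(S,\mathscr{C})$ is binary if for all $A,B\in\mathscr{C}$ the symmetric difference $A\oplus B=(A\cup B)\setminus(A\cap B)$ is a union of pairwise disjoint members of $\mathscr{C}$. A circuit injection $f:G_M\rightarrow B$ is a bijection from $E(G)$ onto the cells of $B$ sending each circuit of $G$ to a circuit of $B$; it is nontrivial if $B$ has a circuit which is not the image of any circuit of $G$. $G$ is Hamiltonian if it has a circuit containing all its vertices. A graph of order $n$ is almost Hamiltonian if every set of $n-1$ of its vertices is contained in (the vertex set of) some circuit of $G$. *)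

theory Defs
  imports Main
begin

definition simple_graph :: "'v set \<Rightarrow> 'v set set \<Rightarrow> bool" where
  "simple_graph V E \<longleftrightarrow> finite V \<and>
     (\<forall>e\<in>E. \<exists>u v. u \<noteq> v \<and> u \<in> V \<and> v \<in> V \<and> e = {u, v})"

definition no_isolated :: "'v set \<Rightarrow> 'v set set \<Rightarrow> bool" where
  "no_isolated V E \<longleftrightarrow> (\<forall>v\<in>V. \<exists>e\<in>E. v \<in> e)"

definition is_cycle :: "'v set \<Rightarrow> 'v set set \<Rightarrow> 'v list \<Rightarrow> bool" where
  "is_cycle V E vs \<longleftrightarrow> distinct vs \<and> length vs \<ge> 3 \<and> set vs \<subseteq> V \<and>
     (\<forall>i < length vs. {vs ! i, vs ! ((i + 1) mod length vs)} \<in> E)"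

definition cycle_edges :: "'v list \<Rightarrow> 'v set set" where
  "cycle_edges vs = {{vs ! i, vs ! ((i + 1) mod length vs)} | i. i < length vs}"

text \<open>Circuits of the cycle matroid G_M: edge sets of cycles of G.\<close>
definition graph_circuits :: "'v set \<Rightarrow> 'v set set \<Rightarrow> 'v set set set" where
  "graph_circuits V E = {cycle_edges vs | vs. is_cycle V E vs}"

definition matroid :: "'c set \<Rightarrow> 'c set set \<Rightarrow> bool" where
  "matroid S \<C> \<longleftrightarrow> S \<noteq> {} \<and> \<C> \<subseteq> Pow S \<and>
     (\<forall>A\<in>\<C>. \<forall>B\<in>\<C>. A \<subseteq> B \<longrightarrow> A = B) \<and>
     (\<forall>A\<in>\<C>. \<forall>B\<in>\<C>. \<forall>a\<in>A \<inter> B. \<forall>b\<in>(A \<union> B) - (A \<inter> B).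
        \<exists>D\<in>\<C>. D \<subseteq> A \<union> B \<and> a \<notin> D \<and> b \<in> D)"

definition binary_matroid :: "'c set \<Rightarrow> 'c set set \<Rightarrow> bool" where
  "binary_matroid S \<C> \<longleftrightarrow> matroid S \<C> \<and>
     (\<forall>A\<in>\<C>. \<forall>B\<in>\<C>. \<exists>\<D> \<subseteq> \<C>. pairwise disjnt \<D> \<and> \<Union>\<D> = (A \<union> B) - (A \<inter> B))"

definition circuit_injection :: "'v set \<Rightarrow> 'v set set \<Rightarrow> ('v set \<Rightarrow> 'c) \<Rightarrow> 'c set \<Rightarrow> 'c set set \<Rightarrow> bool" where
  "circuit_injection V E f S \<C> \<longleftrightarrow> bij_betw f E S \<and> (\<forall>C\<in>graph_circuits V E. f ` C \<in> \<C>)"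

definition nontrivial_circuit_injection :: "'v set \<Rightarrow> 'v set set \<Rightarrow> ('v set \<Rightarrow> 'c) \<Rightarrow> 'c set \<Rightarrow> 'c set set \<Rightarrow> bool" where
  "nontrivial_circuit_injection V E f S \<C> \<longleftrightarrow> circuit_injection V E f S \<C> \<and>
     (\<exists>D\<in>\<C>. \<forall>C\<in>graph_circuits V E. f ` C \<noteq> D)"

definition hamiltonian :: "'v set \<Rightarrow> 'v set set \<Rightarrow> bool" where
  "hamiltonian V E \<longleftrightarrow> (\<exists>vs. is_cycle V E vs \<and> set vs = V)"

definition almost_hamiltonian :: "'v set \<Rightarrow> 'v set set \<Rightarrow> bool" where
  "almost_hamiltonian V E \<longleftrightarrow>
     (\<forall>U \<subseteq> V. card U = card V - 1 \<longrightarrow> (\<exists>vs. is_cycle V E vs \<and> U \<subseteq> set vs))"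

end

theory Submission
  imports Defs
begin


definition sd :: "'a set \<Rightarrow> 'a set \<Rightarrow> 'a set" where "sd A B = (A - B) \<union> (B - A)"
definition xf :: "'a set list \<Rightarrow> 'a set" where "xf L = foldr sd L {}"
definition dg :: "'v set set \<Rightarrow> 'v \<Rightarrow> nat" where "dg X v = card {e\<in>X. v \<in> e}"
definition odds :: "'v set \<Rightarrow> 'v set set \<Rightarrow> 'v set" where "odds V X = {v\<in>V. odd (dg X v)}"

lemma sd_assoc: "sd (sd A B) C = sd A (sd B C)" by (auto simp: sd_def)
lemma sd_comm: "sd A B = sd B A" by (auto simp: sd_def)
lemma sd_empty[simp]: "sd A {} = A" "sd {} A = A" "sd A A = {}" by (auto simp: sd_def)
lemma sd_disj: "A \<inter> B = {} \<Longrightarrow> sd A B = A \<union> B" by (auto simp: sd_def)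
lemma xf_Nil[simp]: "xf [] = {}" and xf_Cons[simp]: "xf (A # L) = sd A (xf L)" by (auto simp: xf_def)
lemma xf_append: "xf (L @ M) = sd (xf L) (xf M)"
  by (induction L) (auto simp: sd_assoc)
lemma xf_sub: "set L \<subseteq> Pow E \<Longrightarrow> xf L \<subseteq> E"
  by (induction L) (auto simp: sd_def)

lemma sd_card: assumes "finite A" "finite B"
  shows "card (sd A B) + 2 * card (A \<inter> B) = card A + card B"
proof -
  have e: "sd A B = (A \<union> B) - (A \<inter> B)" by (auto simp: sd_def)
  have "card ((A \<union> B) - (A \<inter> B)) = card (A \<union> B) - card (A \<inter> B)"
    by (rule card_Diff_subset) (use assms in auto)
  moreover have "card (A \<union> B) + card (A \<inter> B) = card A + card B"
    using card_Un_Int[OF assms] by simp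
  moreover have "card (A \<inter> B) \<le> card (A \<union> B)" by (rule card_mono) (use assms in auto)
  ultimately show ?thesis unfolding e by simp
qed

lemma sd_parity: assumes "finite A" "finite B"
  shows "odd (card (sd A B)) \<longleftrightarrow> (odd (card A) \<noteq> odd (card B))"
proof -
  have "card (sd A B) + 2 * card (A \<inter> B) = card A + card B" by (rule sd_card[OF assms])
  then show ?thesis by presburger
qed

lemma odds_sd: assumes "finite X" "finite Y"
  shows "odds V (sd X Y) = sd (odds V X) (odds V Y)"
proof -
  have "\<And>v. {e \<in> sd X Y. v \<in> e} = sd {e\<in>X. v \<in> e} {e\<in>Y. v\<in>e}" by (auto simp: sd_def)
  then have "\<And>v. odd (dg (sd X Y) v) \<longleftrightarrow> (odd (dg X v) \<noteq> odd (dg Y v))"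
    unfolding dg_def by (simp add: sd_parity assms)
  then show ?thesis unfolding odds_def sd_def by auto
qed

lemma sum_parity: "finite A \<Longrightarrow> even (sum f A) \<longleftrightarrow> even (card {x\<in>A. odd (f x :: nat)})"
proof (induction A rule: finite_induct)
  case empty then show ?case by simp
next
  case (insert x F)
  have "{y\<in>insert x F. odd (f y)} = (if odd (f x) then insert x {y\<in>F. odd (f y)} else {y\<in>F. odd (f y)})"
    by auto
  moreover have "x \<notin> {y\<in>F. odd (f y)}" using insert by auto
  ultimately show ?case using insert by (auto simp: card_insert_if)
qed

lemma graph_finite: "simple_graph V E \<Longrightarrow> finite E"
proof -
  assume g: "simple_graph V E"
  then have "E \<subseteq> Pow V" unfolding simple_graph_def by auto
  moreover have "finite (Pow V)" using g unfolding simple_graph_def by auto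
  ultimately show "finite E" by (rule finite_subset)
qed

lemma edge_card: "simple_graph V E \<Longrightarrow> e \<in> E \<Longrightarrow> card e = 2 \<and> e \<subseteq> V"
  unfolding simple_graph_def by auto

lemma handshake: assumes g: "simple_graph V E" and X: "X \<subseteq> E"
  shows "even (card (odds V X))"
proof -
  have fV: "finite V" using g unfolding simple_graph_def by auto
  have fX: "finite X" using graph_finite[OF g] X finite_subset by auto
  have "(\<Sum>v\<in>V. card {e\<in>X. v \<in> e}) = 2 * card X"
  proof (rule sum_multicount[OF fV fX], intro ballI)
    fix e assume "e \<in> X"
    then have "card e = 2 \<and> e \<subseteq> V" using edge_card[OF g] X by auto
    moreover have "{v \<in> V. v \<in> e} = e" using calculation by auto
    ultimately show "card {v \<in> V. v \<in> e} = 2" by simp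
  qed
  then have "even (\<Sum>v\<in>V. dg X v)" unfolding dg_def by simp
  then show ?thesis unfolding odds_def using sum_parity[OF fV] by simp
qed


lemma mod_lt: "i < (m::nat) \<Longrightarrow> j mod m < m" by simp

lemma cyc_E: "is_cycle V E vs \<Longrightarrow> cycle_edges vs \<subseteq> E"
  unfolding is_cycle_def cycle_edges_def by auto

lemma cyc_edge_sub: "e \<in> cycle_edges vs \<Longrightarrow> e \<subseteq> set vs"
proof -
  assume "e \<in> cycle_edges vs"
  then obtain i where i: "i < length vs" "e = {vs ! i, vs ! ((i + 1) mod length vs)}"
    unfolding cycle_edges_def by auto
  then have "(i + 1) mod length vs < length vs" using mod_lt by blast
  then show ?thesis using i by auto
qed

lemma cyc_nonempty: "is_cycle V E vs \<Longrightarrow> cycle_edges vs \<noteq> {}"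
proof -
  assume "is_cycle V E vs"
  then have "0 < length vs" unfolding is_cycle_def by auto
  then have "{vs ! 0, vs ! ((0 + 1) mod length vs)} \<in> cycle_edges vs" unfolding cycle_edges_def by blast
  then show ?thesis by auto
qed

lemma succ_eq:
  assumes "i < (m::nat)" "(i + 1) mod m = k"
  shows "i = (if k = 0 then m - 1 else k - 1)"
proof (cases "i + 1 < m")
  case True then have "(i+1) mod m = i + 1" by simp
  then show ?thesis using assms by auto
next
  case False then have "i + 1 = m" using assms by auto
  then show ?thesis using assms by auto
qed

lemma prev_succ: "k < (m::nat) \<Longrightarrow> ((if k = 0 then m - 1 else k - 1) + 1) mod m = k"
  by (cases k) auto

lemma prev_lt: "k < (m::nat) \<Longrightarrow> (if k = 0 then m - 1 else k - 1) < m"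
  by auto

lemma prev_ne_succ: assumes "k < (m::nat)" "m \<ge> 3" "(if k = 0 then m - 1 else k - 1) = (k + 1) mod m" shows False
proof (cases "k + 1 < m")
  case True then have "(k+1) mod m = k+1" by simp
  then show False using assms by (auto split: if_splits)
next
  case False then have "k+1 = m" using assms by simp
  then have "(k+1) mod m = 0" by simp
  then show False using assms \<open>k+1 = m\<close> by (auto split: if_splits)
qed

lemma in_ce:
  assumes "distinct vs" "i < length vs" "k < length vs"
  shows "vs ! k \<in> {vs ! i, vs ! ((i + 1) mod length vs)} \<longleftrightarrow> (i = k \<or> (i + 1) mod length vs = k)"
proof -
  have "(i + 1) mod length vs < length vs" using assms mod_lt by blast
  then show ?thesis using assms nth_eq_iff_index_eq by auto
qed

lemma cyc_star:
  assumes c: "is_cycle V E vs" and k: "k < length vs"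
  defines "m \<equiv> length vs"
  defines "p \<equiv> (if k = 0 then m - 1 else k - 1)"
  shows "{e \<in> cycle_edges vs. vs ! k \<in> e} = {{vs ! k, vs ! ((k + 1) mod m)}, {vs ! p, vs ! k}}"
    and "{vs ! k, vs ! ((k + 1) mod m)} \<noteq> {vs ! p, vs ! k}"
proof -
  have d: "distinct vs" and m3: "m \<ge> 3" using c unfolding is_cycle_def m_def by auto
  have pm: "p < m" "(p + 1) mod m = k" using k prev_lt prev_succ unfolding p_def m_def by auto
  show "{e \<in> cycle_edges vs. vs ! k \<in> e} = {{vs ! k, vs ! ((k + 1) mod m)}, {vs ! p, vs ! k}}"
  proof
    show "{e \<in> cycle_edges vs. vs ! k \<in> e} \<subseteq> {{vs ! k, vs ! ((k + 1) mod m)}, {vs ! p, vs ! k}}"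
    proof
      fix e assume "e \<in> {e \<in> cycle_edges vs. vs ! k \<in> e}"
      then obtain i where i: "i < m" "e = {vs ! i, vs ! ((i + 1) mod m)}" "vs ! k \<in> e"
        unfolding cycle_edges_def m_def by auto
      then have "i = k \<or> (i + 1) mod m = k" using in_ce[OF d] k unfolding m_def by auto
      then show "e \<in> {{vs ! k, vs ! ((k + 1) mod m)}, {vs ! p, vs ! k}}"
      proof
        assume "i = k" then show ?thesis using i by auto
      next
        assume "(i + 1) mod m = k"
        then have "i = p" using succ_eq[OF i(1)] unfolding p_def by auto
        then show ?thesis using i pm by auto
      qed
    qed
  next
    show "{{vs ! k, vs ! ((k + 1) mod m)}, {vs ! p, vs ! k}} \<subseteq> {e \<in> cycle_edges vs. vs ! k \<in> e}"
    proof -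
      have "{vs ! k, vs ! ((k + 1) mod m)} \<in> cycle_edges vs"
        unfolding cycle_edges_def m_def using k by auto
      moreover have "{vs ! p, vs ! ((p + 1) mod m)} \<in> cycle_edges vs"
        unfolding cycle_edges_def m_def using pm unfolding m_def by blast
      ultimately show ?thesis using pm by auto
    qed
  qed
  show "{vs ! k, vs ! ((k + 1) mod m)} \<noteq> {vs ! p, vs ! k}"
  proof
    assume eq: "{vs ! k, vs ! ((k + 1) mod m)} = {vs ! p, vs ! k}"
    have kp: "k \<noteq> p" using m3 k unfolding p_def m_def by auto
    then have "vs ! p \<noteq> vs ! k" using d pm k unfolding m_def by (simp add: nth_eq_iff_index_eq)
    then have "vs ! p = vs ! ((k + 1) mod m)" using eq by (auto simp: doubleton_eq_iff)
    moreover have "(k + 1) mod m < m" using m3 by simp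
    ultimately have "p = (k + 1) mod m" using d pm unfolding m_def by (simp add: nth_eq_iff_index_eq)
    then show False using prev_ne_succ[of k m] m3 k unfolding p_def m_def by auto
  qed
qed

lemma cyc_even:
  assumes c: "is_cycle V E vs"
  shows "odds W (cycle_edges vs) = {}"
proof -
  have "even (dg (cycle_edges vs) u)" for u
  proof (cases "u \<in> set vs")
    case False
    then have "{e \<in> cycle_edges vs. u \<in> e} = {}" using cyc_edge_sub by blast
    then show ?thesis unfolding dg_def by (simp only: card.empty) simp
  next
    case True
    then obtain k where k: "k < length vs" "u = vs ! k" by (metis in_set_conv_nth)
    show ?thesis unfolding dg_def k(2) cyc_star(1)[OF c k(1)] using cyc_star(2)[OF c k(1)] by simp
  qed
  then show ?thesis unfolding odds_def by auto
qed

lemma cyc_minimal: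
  assumes c: "is_cycle V E vs" and y: "y \<subseteq> cycle_edges vs" "y \<noteq> {}"
    and ev: "\<forall>u\<in>set vs. even (dg y u)"
  shows "y = cycle_edges vs"
proof -
  define m where "m = length vs"
  have d: "distinct vs" and m3: "m \<ge> 3" using c unfolding is_cycle_def m_def by auto
  define ce where "ce i = {vs ! i, vs ! ((i + 1) mod m)}" for i
  have step: "ce ((i + 1) mod m) \<in> y" if i: "i < m" "ce i \<in> y" for i
  proof (rule ccontr)
    assume nin: "ce ((i + 1) mod m) \<notin> y"
    define k where "k = (i + 1) mod m"
    have km: "k < m" using m3 unfolding k_def by simp
    have ip: "(if k = 0 then m - 1 else k - 1) = i" using succ_eq[OF i(1)] k_def by auto
    have st: "{e \<in> cycle_edges vs. vs ! k \<in> e} = {ce k, ce i}"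
    proof -
      have "{e \<in> cycle_edges vs. vs ! k \<in> e} = {{vs ! k, vs ! ((k + 1) mod m)}, {vs ! i, vs ! k}}"
        using cyc_star(1)[OF c km[unfolded m_def], unfolded ip[unfolded m_def]] unfolding m_def .
      also have "\<dots> = {ce k, ce i}" unfolding ce_def k_def by auto
      finally show ?thesis .
    qed
    have "{e \<in> y. vs ! k \<in> e} = {ce i}"
    proof
      show "{ce i} \<subseteq> {e \<in> y. vs ! k \<in> e}" using i(2) unfolding ce_def k_def by auto
      show "{e \<in> y. vs ! k \<in> e} \<subseteq> {ce i}"
      proof
        fix e assume e: "e \<in> {e \<in> y. vs ! k \<in> e}"
        then have "e \<in> {ce k, ce i}" using st y(1) by blast
        moreover have "e \<noteq> ce k" using e nin unfolding k_def by auto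
        ultimately show "e \<in> {ce i}" by blast
      qed
    qed
    then have "dg y (vs ! k) = 1" unfolding dg_def by simp
    moreover have "vs ! k \<in> set vs" using km unfolding m_def by simp
    ultimately show False using ev by fastforce
  qed
  obtain e0 where "e0 \<in> y" using y by auto
  then obtain i0 where i0: "i0 < m" "ce i0 \<in> y"
    using y(1) \<open>e0 \<in> y\<close> unfolding cycle_edges_def ce_def m_def by blast
  have all: "ce ((i0 + t) mod m) \<in> y" for t
  proof (induction t)
    case 0 then show ?case using i0 by simp
  next
    case (Suc t)
    have "(i0 + t) mod m < m" using m3 by simp
    then have "ce (((i0 + t) mod m + 1) mod m) \<in> y" using step Suc by blast
    moreover have "((i0 + t) mod m + 1) mod m = (i0 + Suc t) mod m" by (simp add: mod_Suc_eq)
    ultimately show ?case by simp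
  qed
  have "cycle_edges vs \<subseteq> y"
  proof
    fix e assume "e \<in> cycle_edges vs"
    then obtain j where j: "j < m" "e = ce j" unfolding cycle_edges_def ce_def m_def by auto
    have "(i0 + (m - i0 + j)) mod m = j" using i0 j by simp
    then show "e \<in> y" using all[of "m - i0 + j"] j by simp
  qed
  then show ?thesis using y by auto
qed

lemma cyc_odds_sub: "y \<subseteq> cycle_edges vs \<Longrightarrow> odds W y \<subseteq> set vs"
proof
  fix u assume y: "y \<subseteq> cycle_edges vs" and "u \<in> odds W y"
  then have "odd (dg y u)" unfolding odds_def by auto
  then have "dg y u \<noteq> 0" by presburger
  then obtain e where "e \<in> y" "u \<in> e" unfolding dg_def by (metis (mono_tags, lifting) card.empty empty_Collect_eq)
  then show "u \<in> set vs" using y cyc_edge_sub by blast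
qed



lemma cyc_from_path:
  assumes d: "distinct ps" and l: "length ps \<ge> 3" and sV: "set ps \<subseteq> V"
    and pe: "\<forall>t. Suc t < length ps \<longrightarrow> {ps ! t, ps ! Suc t} \<in> E"
    and ce: "{ps ! (length ps - 1), ps ! 0} \<in> E"
  shows "is_cycle V E ps"
    and "cycle_edges ps = {{ps ! t, ps ! Suc t} | t. Suc t < length ps} \<union> {{ps ! (length ps - 1), ps ! 0}}"
proof -
  define n where "n = length ps"
  have key: "{ps ! i, ps ! ((i + 1) mod n)} = (if Suc i < n then {ps ! i, ps ! Suc i} else {ps ! (n - 1), ps ! 0})"
    if "i < n" for i
  proof (cases "Suc i < n")
    case True then show ?thesis by simp
  next
    case False then have "i = n - 1" "Suc i = n" using that by auto
    then show ?thesis by (auto simp: insert_commute)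
  qed
  show "is_cycle V E ps"
    unfolding is_cycle_def
  proof (intro conjI allI impI)
    fix i assume i: "i < length ps"
    show "{ps ! i, ps ! ((i + 1) mod length ps)} \<in> E"
      using key[OF i[folded n_def]] pe ce unfolding n_def by (auto split: if_splits)
  qed (use d l sV in auto)
  show "cycle_edges ps = {{ps ! t, ps ! Suc t} | t. Suc t < length ps} \<union> {{ps ! (length ps - 1), ps ! 0}}"
  proof
    show "cycle_edges ps \<subseteq> {{ps ! t, ps ! Suc t} | t. Suc t < length ps} \<union> {{ps ! (length ps - 1), ps ! 0}}"
    proof
      fix e assume "e \<in> cycle_edges ps"
      then obtain i where i: "i < n" "e = {ps ! i, ps ! ((i + 1) mod n)}"
        unfolding cycle_edges_def n_def by blast
      show "e \<in> {{ps ! t, ps ! Suc t} | t. Suc t < length ps} \<union> {{ps ! (length ps - 1), ps ! 0}}"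
        using key[OF i(1)] i(2) unfolding n_def by (auto split: if_splits)
    qed
    show "{{ps ! t, ps ! Suc t} | t. Suc t < length ps} \<union> {{ps ! (length ps - 1), ps ! 0}} \<subseteq> cycle_edges ps"
    proof
      fix e assume "e \<in> {{ps ! t, ps ! Suc t} | t. Suc t < length ps} \<union> {{ps ! (length ps - 1), ps ! 0}}"
      then consider t where "Suc t < n" "e = {ps ! t, ps ! Suc t}" | "e = {ps ! (n - 1), ps ! 0}"
        unfolding n_def by blast
      then show "e \<in> cycle_edges ps"
      proof cases
        case 1
        then have "e = {ps ! t, ps ! ((t + 1) mod n)}" using key[of t] by auto
        then show ?thesis using 1 unfolding cycle_edges_def n_def by auto
      next
        case 2
        have "n - 1 < n" "Suc (n - 1) = n" using l unfolding n_def by auto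
        then have "e = {ps ! (n - 1), ps ! ((n - 1 + 1) mod n)}" using 2 by simp
        then show ?thesis using \<open>n - 1 < n\<close> unfolding cycle_edges_def n_def by blast
      qed
    qed
  qed
qed


definition isp :: "'v set \<Rightarrow> 'v set set \<Rightarrow> 'v list \<Rightarrow> bool" where
  "isp V X ps \<longleftrightarrow> distinct ps \<and> set ps \<subseteq> V \<and> length ps \<ge> 2 \<and>
     (\<forall>t. Suc t < length ps \<longrightarrow> {ps ! t, ps ! Suc t} \<in> X)"

lemma find_cycle:
  assumes g: "simple_graph V E" and X: "X \<subseteq> E" "X \<noteq> {}"
    and ev: "\<forall>u\<in>V. even (dg X u)"
  shows "\<exists>vs. is_cycle V E vs \<and> cycle_edges vs \<subseteq> X"
proof -
  have fV: "finite V" using g unfolding simple_graph_def by auto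
  have fX: "finite X" using graph_finite[OF g] X finite_subset by auto
  obtain e where e: "e \<in> X" using X by auto
  then obtain a b where ab: "a \<noteq> b" "a \<in> V" "b \<in> V" "e = {a, b}"
    using g X unfolding simple_graph_def by blast
  have "isp V X [a, b]" unfolding isp_def
  proof (intro conjI allI impI)
    fix t assume "Suc t < length [a, b]"
    then have "t = 0" by simp
    then show "{[a, b] ! t, [a, b] ! Suc t} \<in> X" using ab e by simp
  qed (use ab in simp_all)
  moreover have "\<forall>q. isp V X q \<longrightarrow> length q < Suc (card V)"
  proof (intro allI impI)
    fix q assume "isp V X q"
    then have "length q = card (set q)" "card (set q) \<le> card V"
      unfolding isp_def using distinct_card[of q] card_mono[OF fV, of "set q"] by auto
    then show "length q < Suc (card V)" by simp
  qed
  ultimately obtain ps where ps: "isp V X ps" and mx: "\<forall>q. isp V X q \<longrightarrow> length q \<le> length ps"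
    using ex_has_greatest_nat[of "isp V X" "[a,b]" length "Suc (card V)"] by blast
  have l2: "length ps \<ge> 2" and dps: "distinct ps" and sps: "set ps \<subseteq> V"
    and pe: "\<forall>t. Suc t < length ps \<longrightarrow> {ps ! t, ps ! Suc t} \<in> X"
    using ps unfolding isp_def by auto
  define w where "w = ps ! 0"
  define u where "u = ps ! 1"
  have "Suc 0 < length ps" using l2 by simp
  then have wu: "{w, u} \<in> X" using pe unfolding w_def u_def by simp
  have "0 < length ps" using l2 by linarith
  then have "ps ! 0 \<in> set ps" by simp
  then have wV: "w \<in> V" using sps unfolding w_def by auto
  have "\<exists>e\<in>X. w \<in> e \<and> e \<noteq> {w, u}"
  proof (rule ccontr)
    assume "\<not> ?thesis"
    then have "{e \<in> X. w \<in> e} \<subseteq> {{w, u}}" by blast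
    moreover have "{w, u} \<in> {e \<in> X. w \<in> e}" using wu by simp
    ultimately have "{e \<in> X. w \<in> e} = {{w, u}}" by blast
    then have "dg X w = 1" unfolding dg_def by simp
    moreover have "even (dg X w)" using ev wV by blast
    ultimately show False by simp
  qed
  then obtain e2 where e2: "e2 \<in> X" "w \<in> e2" "e2 \<noteq> {w, u}" by blast
  obtain p q where pq: "p \<noteq> q" "p \<in> V" "q \<in> V" "e2 = {p, q}"
    using g X e2(1) unfolding simple_graph_def by blast
  obtain z where z: "e2 = {w, z}" "z \<noteq> w" "z \<in> V"
  proof (cases "w = p")
    case True then show ?thesis using that pq by blast
  next
    case False then have "w = q" using e2(2) pq by auto
    moreover have "{q, p} = {p, q}" by (rule insert_commute)
    ultimately show ?thesis using that[of p] pq by simp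
  qed
  have zu: "z \<noteq> u" using z e2 by auto
  have "z \<in> set ps"
  proof (rule ccontr)
    assume nz: "z \<notin> set ps"
    have "isp V X (z # ps)"
      unfolding isp_def
    proof (intro conjI allI impI)
      fix t assume t: "Suc t < length (z # ps)"
      show "{(z # ps) ! t, (z # ps) ! Suc t} \<in> X"
      proof (cases t)
        case 0
        have "{z, w} = {w, z}" by (rule insert_commute)
        then show ?thesis using 0 e2 z unfolding w_def by simp
      next
        case (Suc t') then show ?thesis using pe t by auto
      qed
    qed (use nz dps sps z l2 in simp_all)
    then have "length (z # ps) \<le> length ps" using mx by blast
    then show False by simp
  qed
  then obtain j where j: "j < length ps" "ps ! j = z" by (auto simp: in_set_conv_nth)
  have j0: "j \<noteq> 0"
  proof
    assume "j = 0" then show False using j z unfolding w_def by simp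
  qed
  have j1: "j \<noteq> 1"
  proof
    assume "j = 1" then show False using j zu unfolding u_def by simp
  qed
  define cy where "cy = take (Suc j) ps"
  have lcy: "length cy = Suc j" unfolding cy_def using j by simp
  have nth_cy: "cy ! t = ps ! t" if "t < Suc j" for t unfolding cy_def using that by simp
  have clo: "{cy ! (length cy - 1), cy ! 0} = e2"
  proof -
    have "cy ! (length cy - 1) = z" "cy ! 0 = w" using nth_cy lcy j unfolding w_def by auto
    moreover have "{z, w} = {w, z}" by (rule insert_commute)
    ultimately show ?thesis using z by simp
  qed
  have cyc: "is_cycle V E cy"
    and cye: "cycle_edges cy = {{cy ! t, cy ! Suc t} | t. Suc t < length cy} \<union> {{cy ! (length cy - 1), cy ! 0}}"
  proof -
    have a1: "distinct cy" unfolding cy_def using dps by simp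
    have a2: "length cy \<ge> 3" using lcy j0 j1 by simp
    have a3: "set cy \<subseteq> V" unfolding cy_def using sps set_take_subset by fastforce
    have a4: "\<forall>t. Suc t < length cy \<longrightarrow> {cy ! t, cy ! Suc t} \<in> E"
    proof (intro allI impI)
      fix t assume t: "Suc t < length cy"
      then have "cy ! t = ps ! t" "cy ! Suc t = ps ! Suc t" "Suc t < length ps" using nth_cy lcy j by auto
      then show "{cy ! t, cy ! Suc t} \<in> E" using pe X by auto
    qed
    have "{cy ! (length cy - 1), cy ! 0} = e2" using clo by simp
    then have a5: "{cy ! (length cy - 1), cy ! 0} \<in> E" using e2 X by auto
    show "is_cycle V E cy" by (rule cyc_from_path(1)[OF a1 a2 a3 a4 a5])
    show "cycle_edges cy = {{cy ! t, cy ! Suc t} | t. Suc t < length cy} \<union> {{cy ! (length cy - 1), cy ! 0}}"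
      by (rule cyc_from_path(2)[OF a1 a2 a3 a4 a5])
  qed
  have "cycle_edges cy \<subseteq> X"
  proof -
    have "{cy ! (length cy - 1), cy ! 0} = e2" using clo by simp
    moreover have "{cy ! t, cy ! Suc t} \<in> X" if t: "Suc t < length cy" for t
    proof -
      have "cy ! t = ps ! t" "cy ! Suc t = ps ! Suc t" "Suc t < length ps" using t nth_cy lcy j by auto
      then show ?thesis using pe by auto
    qed
    ultimately show ?thesis unfolding cye using e2 by blast
  qed
  then show ?thesis using cyc by blast
qed


abbreviation adj :: "'v set set \<Rightarrow> 'v \<Rightarrow> 'v \<Rightarrow> bool" where
  "adj E \<equiv> (\<lambda>x y. {x, y} \<in> E)"

lemma adj_sym: "(adj E)\<^sup>*\<^sup>* x y \<Longrightarrow> (adj E)\<^sup>*\<^sup>* y x"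
proof -
  have "symp (adj E)" unfolding symp_def by (simp add: insert_commute)
  then have "symp (adj E)\<^sup>*\<^sup>*" by (rule symp_rtranclp)
  then show "(adj E)\<^sup>*\<^sup>* x y \<Longrightarrow> (adj E)\<^sup>*\<^sup>* y x" unfolding symp_def by blast
qed
lemma cyc_reach:
  assumes c: "is_cycle V E vs" and a: "a \<in> set vs" and b: "b \<in> set vs"
  shows "(adj E)\<^sup>*\<^sup>* a b"
proof -
  have e: "\<forall>i<length vs. {vs ! i, vs ! ((i + 1) mod length vs)} \<in> E" using c unfolding is_cycle_def by auto
  have r: "t < length vs \<Longrightarrow> (adj E)\<^sup>*\<^sup>* (vs ! 0) (vs ! t)" for t
  proof (induction t)
    case 0 then show ?case by simp
  next
    case (Suc t)
    then have "(adj E)\<^sup>*\<^sup>* (vs ! 0) (vs ! t)" by simp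
    moreover have "{vs ! t, vs ! Suc t} \<in> E" using e[rule_format, of t] Suc.prems by simp
    ultimately show ?case by (rule rtranclp.rtrancl_into_rtrancl)
  qed
  obtain i where i: "i < length vs" "a = vs ! i" using a by (auto simp: in_set_conv_nth)
  obtain j where j: "j < length vs" "b = vs ! j" using b by (auto simp: in_set_conv_nth)
  have "(adj E)\<^sup>*\<^sup>* (vs ! 0) a" using r i by simp
  then have 1: "(adj E)\<^sup>*\<^sup>* a (vs ! 0)" by (rule adj_sym)
  have 2: "(adj E)\<^sup>*\<^sup>* (vs ! 0) b" using r j by simp
  show ?thesis by (rule rtranclp_trans[OF 1 2])
qed


lemma edge_other: assumes g: "simple_graph V E" and e: "e \<in> E" and v: "v \<in> e"
  shows "\<exists>a. e = {v, a} \<and> a \<noteq> v \<and> a \<in> V"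
proof -
  obtain p q where pq: "p \<noteq> q" "p \<in> V" "q \<in> V" "e = {p, q}"
    using g e unfolding simple_graph_def by blast
  show ?thesis
  proof (cases "v = p")
    case True then show ?thesis using pq by blast
  next
    case False then have "v = q" using v pq by auto
    moreover have "{q, p} = {p, q}" by (rule insert_commute)
    ultimately show ?thesis using pq by auto
  qed
qed

lemma H_edge: "Suc s < length hs \<Longrightarrow> {hs ! s, hs ! Suc s} \<in> cycle_edges hs"
proof -
  assume s: "Suc s < length hs"
  then have "(s + 1) mod length hs = Suc s" by simp
  then have "{hs ! s, hs ! Suc s} = {hs ! s, hs ! ((s + 1) mod length hs)}" by simp
  moreover have "s < length hs" using s by simp
  ultimately show ?thesis unfolding cycle_edges_def by blast
qed

lemma seg_props:
  assumes d: "distinct hs" and ij: "i < j" "j < length hs"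
  defines "ps \<equiv> map ((!) hs) [i..<Suc j]"
  shows "length ps = Suc j - i" "\<And>t. t < Suc j - i \<Longrightarrow> ps ! t = hs ! (i + t)"
    "distinct ps" "set ps \<subseteq> set hs"
    "\<forall>t. Suc t < length ps \<longrightarrow> {ps ! t, ps ! Suc t} \<in> cycle_edges hs"
proof -
  show l: "length ps = Suc j - i" unfolding ps_def using ij by auto
  show n: "\<And>t. t < Suc j - i \<Longrightarrow> ps ! t = hs ! (i + t)"
  proof -
    fix t assume t: "t < Suc j - i"
    have "t < length [i..<Suc j]" using t by (simp del: upt_Suc)
    then have "map ((!) hs) [i..<Suc j] ! t = hs ! ([i..<Suc j] ! t)" by (rule nth_map)
    moreover have "[i..<Suc j] ! t = i + t" by (rule nth_upt) (use t ij in linarith)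
    ultimately show "ps ! t = hs ! (i + t)" unfolding ps_def by simp
  qed
  have inj: "inj_on ((!) hs) (set [i..<Suc j])"
  proof (rule inj_onI)
    fix x y assume "x \<in> set [i..<Suc j]" "y \<in> set [i..<Suc j]" "hs ! x = hs ! y"
    then have "x < length hs" "y < length hs" "hs ! x = hs ! y" using ij by auto
    then show "x = y" using d nth_eq_iff_index_eq[of hs x y] by auto
  qed
  show "distinct ps" unfolding ps_def using inj distinct_map distinct_upt by blast
  show "set ps \<subseteq> set hs" unfolding ps_def using ij by auto
  show "\<forall>t. Suc t < length ps \<longrightarrow> {ps ! t, ps ! Suc t} \<in> cycle_edges hs"
  proof (intro allI impI)
    fix t assume t: "Suc t < length ps"
    then have "ps ! t = hs ! (i + t)" "ps ! Suc t = hs ! Suc (i + t)" "Suc (i + t) < length hs"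
      using n l ij by auto
    then show "{ps ! t, ps ! Suc t} \<in> cycle_edges hs" using H_edge by simp
  qed
qed

lemma chord_cycle_aux:
  assumes c: "is_cycle V E hs" and ij: "i < j" "j < length hs"
    and cE: "{hs ! i, hs ! j} \<in> E" and nH: "{hs ! i, hs ! j} \<notin> cycle_edges hs"
  shows "\<exists>C\<in>graph_circuits V E. {hs ! i, hs ! j} \<in> C \<and> C \<subseteq> cycle_edges hs \<union> {{hs ! i, hs ! j}}"
proof -
  have d: "distinct hs" and sV: "set hs \<subseteq> V" using c unfolding is_cycle_def by auto
  define ps where "ps = map ((!) hs) [i..<Suc j]"
  note sp = seg_props[OF d ij, folded ps_def]
  have HE: "cycle_edges hs \<subseteq> E" by (rule cyc_E[OF c])
  have j1: "j \<noteq> Suc i"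
  proof
    assume "j = Suc i"
    then have "{hs ! i, hs ! j} \<in> cycle_edges hs" using H_edge[of i hs] ij by simp
    then show False using nH by simp
  qed
  have l3: "length ps \<ge> 3" using sp(1) ij j1 by simp
  have a4: "\<forall>t. Suc t < length ps \<longrightarrow> {ps ! t, ps ! Suc t} \<in> E" using sp(5) HE by blast
  have clo: "{ps ! (length ps - 1), ps ! 0} = {hs ! i, hs ! j}"
  proof -
    have "ps ! (length ps - 1) = hs ! j" "ps ! 0 = hs ! i" using sp(1,2) ij by auto
    moreover have "{hs ! j, hs ! i} = {hs ! i, hs ! j}" by (rule insert_commute)
    ultimately show ?thesis by simp
  qed
  have a5: "{ps ! (length ps - 1), ps ! 0} \<in> E" using clo cE by simp
  have a3: "set ps \<subseteq> V" using sp(4) sV by blast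
  have cyc: "is_cycle V E ps" by (rule cyc_from_path(1)[OF sp(3) l3 a3 a4 a5])
  have ce: "cycle_edges ps = {{ps ! t, ps ! Suc t} | t. Suc t < length ps} \<union> {{ps ! (length ps - 1), ps ! 0}}"
    by (rule cyc_from_path(2)[OF sp(3) l3 a3 a4 a5])
  have "cycle_edges ps \<in> graph_circuits V E" unfolding graph_circuits_def using cyc by blast
  moreover have "{hs ! i, hs ! j} \<in> cycle_edges ps" unfolding ce clo by blast
  moreover have "cycle_edges ps \<subseteq> cycle_edges hs \<union> {{hs ! i, hs ! j}}"
    unfolding ce clo using sp(5) by blast
  ultimately show ?thesis by blast
qed

lemma chord_cycle:
  assumes g: "simple_graph V E" and c: "is_cycle V E hs" and cE: "e \<in> E" and es: "e \<subseteq> set hs"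
    and nH: "e \<notin> cycle_edges hs"
  shows "\<exists>C\<in>graph_circuits V E. e \<in> C \<and> C \<subseteq> cycle_edges hs \<union> {e}"
proof -
  obtain p q where pq: "p \<noteq> q" "e = {p, q}" using g cE unfolding simple_graph_def by blast
  obtain i where i: "i < length hs" "hs ! i = p" using es pq by (auto simp: in_set_conv_nth)
  obtain j where j: "j < length hs" "hs ! j = q" using es pq by (auto simp: in_set_conv_nth)
  have "i \<noteq> j" using i j pq by auto
  then consider "i < j" | "j < i" by linarith
  then show ?thesis
  proof cases
    case 1 then show ?thesis using chord_cycle_aux[OF c 1 j(1)] i j pq cE nH by simp
  next
    case 2
    have "e = {hs ! j, hs ! i}" using i j pq by (simp add: insert_commute)
    then show ?thesis using chord_cycle_aux[OF c 2 i(1)] cE nH by simp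
  qed
qed

lemma pair_cycle_aux:
  assumes c: "is_cycle V E hs" and ij: "i < j" "j < length hs"
    and v: "v \<in> V" "v \<notin> set hs"
    and e1: "{v, hs ! i} \<in> E" and e2: "{v, hs ! j} \<in> E"
  shows "\<exists>C\<in>graph_circuits V E. {v, hs ! i} \<in> C \<and> {v, hs ! j} \<in> C \<and>
           C \<subseteq> cycle_edges hs \<union> {{v, hs ! i}, {v, hs ! j}}"
proof -
  have d: "distinct hs" and sV: "set hs \<subseteq> V" using c unfolding is_cycle_def by auto
  define sg where "sg = map ((!) hs) [i..<Suc j]"
  note sp = seg_props[OF d ij, folded sg_def]
  define ps where "ps = v # sg"
  have HE: "cycle_edges hs \<subseteq> E" by (rule cyc_E[OF c])
  have lps: "length ps = Suc (Suc j - i)" unfolding ps_def using sp(1) by simp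
  have l3: "length ps \<ge> 3" using lps ij by simp
  have dps: "distinct ps" unfolding ps_def using sp(3,4) v by auto
  have a3: "set ps \<subseteq> V" unfolding ps_def using sp(4) sV v by auto
  have pe: "{ps ! t, ps ! Suc t} \<in> cycle_edges hs \<union> {{v, hs ! i}}" if t: "Suc t < length ps" for t
  proof (cases t)
    case 0
    then have "ps ! t = v" "ps ! Suc t = hs ! i" unfolding ps_def using sp(2)[of 0] ij by auto
    then show ?thesis by simp
  next
    case (Suc t')
    then have "ps ! t = sg ! t'" "ps ! Suc t = sg ! Suc t'" "Suc t' < length sg"
      unfolding ps_def using t lps sp(1) by auto
    then show ?thesis using sp(5) by auto
  qed
  have a4: "\<forall>t. Suc t < length ps \<longrightarrow> {ps ! t, ps ! Suc t} \<in> E"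
  proof (intro allI impI)
    fix t assume "Suc t < length ps"
    then have "{ps ! t, ps ! Suc t} \<in> cycle_edges hs \<union> {{v, hs ! i}}" by (rule pe)
    then show "{ps ! t, ps ! Suc t} \<in> E" using HE e1 by auto
  qed
  have clo: "{ps ! (length ps - 1), ps ! 0} = {v, hs ! j}"
  proof -
    have "length ps - 1 = Suc (j - i)" using lps ij by linarith
    then have "ps ! (length ps - 1) = sg ! (j - i)" unfolding ps_def by (simp only: nth_Cons_Suc)
    then have "ps ! (length ps - 1) = hs ! j" using sp(2)[of "j - i"] ij by simp
    moreover have "ps ! 0 = v" unfolding ps_def by simp
    moreover have "{hs ! j, v} = {v, hs ! j}" by (rule insert_commute)
    ultimately show ?thesis by simp
  qed
  have a5: "{ps ! (length ps - 1), ps ! 0} \<in> E" using clo e2 by simp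
  have cyc: "is_cycle V E ps" by (rule cyc_from_path(1)[OF dps l3 a3 a4 a5])
  have ce: "cycle_edges ps = {{ps ! t, ps ! Suc t} | t. Suc t < length ps} \<union> {{ps ! (length ps - 1), ps ! 0}}"
    by (rule cyc_from_path(2)[OF dps l3 a3 a4 a5])
  have "cycle_edges ps \<in> graph_circuits V E" unfolding graph_circuits_def using cyc by blast
  moreover have "{v, hs ! j} \<in> cycle_edges ps" unfolding ce clo by blast
  moreover have "{v, hs ! i} \<in> cycle_edges ps"
  proof -
    have "ps ! 0 = v" "ps ! Suc 0 = hs ! i" unfolding ps_def using sp(2)[of 0] ij by auto
    moreover have "Suc 0 < length ps" using l3 by simp
    ultimately show ?thesis unfolding ce by force
  qed
  moreover have "cycle_edges ps \<subseteq> cycle_edges hs \<union> {{v, hs ! i}, {v, hs ! j}}"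
    unfolding ce clo using pe by blast
  ultimately show ?thesis by blast
qed

lemma pair_cycle:
  assumes c: "is_cycle V E hs" and v: "v \<in> V" "v \<notin> set hs"
    and a: "a \<in> set hs" and b: "b \<in> set hs" and ab: "a \<noteq> b"
    and e1: "{v, a} \<in> E" and e2: "{v, b} \<in> E"
  shows "\<exists>C\<in>graph_circuits V E. {v, a} \<in> C \<and> {v, b} \<in> C \<and> C \<subseteq> cycle_edges hs \<union> {{v, a}, {v, b}}"
proof -
  obtain i where i: "i < length hs" "hs ! i = a" using a by (auto simp: in_set_conv_nth)
  obtain j where j: "j < length hs" "hs ! j = b" using b by (auto simp: in_set_conv_nth)
  have "i \<noteq> j" using i j ab by auto
  then consider "i < j" | "j < i" by linarith
  then show ?thesis
  proof cases
    case 1 then show ?thesis using pair_cycle_aux[OF c 1 j(1) v] i j e1 e2 by simp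
  next
    case 2
    have "{{v, b}, {v, a}} = {{v, a}, {v, b}}" by (rule insert_commute)
    then show ?thesis using pair_cycle_aux[OF c 2 i(1) v] i j e1 e2 by auto
  qed
qed


lemma gc_sub: "C \<in> graph_circuits V E \<Longrightarrow> C \<subseteq> E"
  unfolding graph_circuits_def using cyc_E by blast

lemma gc_even: "C \<in> graph_circuits V E \<Longrightarrow> odds W C = {}"
  unfolding graph_circuits_def using cyc_even by blast

lemma reduce:
  assumes g: "simple_graph V E" and c: "is_cycle V E hs" and cov: "V - {v} \<subseteq> set hs"
  shows "X \<subseteq> E \<Longrightarrow> \<exists>L. set L \<subseteq> graph_circuits V E \<and>
           sd X (xf L) - cycle_edges hs \<subseteq> {e. v \<in> e \<and> v \<notin> set hs} \<and>
           card (sd X (xf L) - cycle_edges hs) \<le> 1"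
proof (induction "card (X - cycle_edges hs)" arbitrary: X rule: less_induct)
  case (less X)
  define H where "H = cycle_edges hs"
  have fE: "finite E" by (rule graph_finite[OF g])
  have fX: "finite (X - H)" using less.prems fE finite_subset by blast
  have step: "\<exists>L. set L \<subseteq> graph_circuits V E \<and>
           sd X (xf L) - H \<subseteq> {e. v \<in> e \<and> v \<notin> set hs} \<and> card (sd X (xf L) - H) \<le> 1"
    if C: "C \<in> graph_circuits V E" and lt: "card (sd X C - H) < card (X - H)" for C
  proof -
    have "sd X C \<subseteq> E" using C gc_sub less.prems unfolding sd_def by blast
    then obtain L1 where L1: "set L1 \<subseteq> graph_circuits V E"
      "sd (sd X C) (xf L1) - H \<subseteq> {e. v \<in> e \<and> v \<notin> set hs}" "card (sd (sd X C) (xf L1) - H) \<le> 1"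
      using less.hyps[OF lt[unfolded H_def]] unfolding H_def by blast
    have "sd X (xf (C # L1)) = sd (sd X C) (xf L1)" by (simp add: sd_assoc)
    then show ?thesis using L1 C by (intro exI[of _ "C # L1"]) auto
  qed
  show ?case
  proof (cases "\<exists>e\<in>X - H. e \<subseteq> set hs")
    case True
    then obtain e where e: "e \<in> X" "e \<notin> H" "e \<subseteq> set hs" by blast
    then obtain C where C: "C \<in> graph_circuits V E" "e \<in> C" "C \<subseteq> H \<union> {e}"
      using chord_cycle[OF g c _ e(3)] less.prems unfolding H_def by blast
    have eq: "sd X C - H = (X - H) - {e}" using C e unfolding sd_def by blast
    have "card ((X - H) - {e}) < card (X - H)" using fX e by (intro card_Diff1_less) auto
    then have "card (sd X C - H) < card (X - H)" by (simp only: eq)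
    from step[OF C(1) this] show ?thesis unfolding H_def .
  next
    case False
    have sub: "X - H \<subseteq> {e. v \<in> e \<and> v \<notin> set hs}"
    proof
      fix e assume e: "e \<in> X - H"
      then have eV: "e \<subseteq> V" using less.prems edge_card[OF g] by blast
      have "\<not> e \<subseteq> set hs" using False e by blast
      then show "e \<in> {e. v \<in> e \<and> v \<notin> set hs}" using eV cov by blast
    qed
    show ?thesis
    proof (cases "card (X - H) \<le> 1")
      case True
      then show ?thesis using sub unfolding H_def by (intro exI[of _ "[]"]) simp
    next
      case False
      then obtain e1 e2 where e12: "e1 \<in> X - H" "e2 \<in> X - H" "e1 \<noteq> e2"
        using card_le_Suc0_iff_eq[OF fX] by auto
      have v1: "v \<in> e1" "v \<in> e2" "v \<notin> set hs" using e12 sub by auto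
      obtain a where a: "e1 = {v, a}" "a \<noteq> v" "a \<in> V" using edge_other[OF g _ v1(1)] e12 less.prems by blast
      obtain b where b: "e2 = {v, b}" "b \<noteq> v" "b \<in> V" using edge_other[OF g _ v1(2)] e12 less.prems by blast
      have ab: "a \<noteq> b" using a b e12 by auto
      have vV: "v \<in> V" using e12 less.prems edge_card[OF g] v1 by blast
      obtain C where C: "C \<in> graph_circuits V E" "e1 \<in> C" "e2 \<in> C" "C \<subseteq> H \<union> {e1, e2}"
        using pair_cycle[OF c vV v1(3), of a b] a b ab cov e12 less.prems unfolding H_def by blast
      have eq: "sd X C - H = (X - H) - {e1, e2}" using C e12 unfolding sd_def by blast
      have "card ((X - H) - {e1, e2}) < card (X - H)"
        using fX e12 by (intro psubset_card_mono) auto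
      then have "card (sd X C - H) < card (X - H)" by (simp only: eq)
      from step[OF C(1) this] show ?thesis unfolding H_def .
    qed
  qed
qed


lemma xf_disj_list: "distinct as \<Longrightarrow> pairwise disjnt (set as) \<Longrightarrow> xf as = \<Union>(set as)"
proof (induction as)
  case Nil then show ?case by simp
next
  case (Cons a as)
  then have "xf as = \<Union>(set as)" by (simp add: pairwise_insert)
  moreover have "a \<inter> \<Union>(set as) = {}"
    using Cons.prems unfolding pairwise_def disjnt_def by fastforce
  ultimately show ?case by (simp add: sd_disj)
qed

lemma sum_disj_list: "distinct as \<Longrightarrow> pairwise disjnt (set as) \<Longrightarrow> \<forall>A\<in>set as. finite A \<Longrightarrow>
    sum_list (map card as) = card (\<Union>(set as))"
proof (induction as)
  case Nil then show ?case by simp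
next
  case (Cons a as)
  then have "sum_list (map card as) = card (\<Union>(set as))" by (simp add: pairwise_insert)
  moreover have "a \<inter> \<Union>(set as) = {}"
    using Cons.prems unfolding pairwise_def disjnt_def by fastforce
  moreover have "finite a" "finite (\<Union>(set as))" using Cons.prems by auto
  ultimately show ?case by (simp add: card_Un_disjoint)
qed

lemma finite_xf: "\<forall>A\<in>set L. finite A \<Longrightarrow> finite (xf L)"
  by (induction L) (auto simp: sd_def)

lemma card_xf: "\<forall>A\<in>set L. finite A \<Longrightarrow> card (xf L) \<le> sum_list (map card L)"
proof (induction L)
  case Nil then show ?case by simp
next
  case (Cons a L)
  have "finite a" "finite (xf L)" using Cons.prems finite_xf by auto
  then have "card (sd a (xf L)) \<le> card a + card (xf L)" using sd_card by fastforce
  then show ?case using Cons by simp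
qed

lemma binary_xf:
  assumes b: "binary_matroid S \<C>" and fS: "finite S"
  shows "set L \<subseteq> \<C> \<Longrightarrow> \<exists>\<D>\<subseteq>\<C>. pairwise disjnt \<D> \<and> \<Union>\<D> = xf L"
proof -
  have m: "matroid S \<C>" using b unfolding binary_matroid_def by auto
  have CS: "\<C> \<subseteq> Pow S" using m unfolding matroid_def by auto
  have I: "\<And>A B. A \<in> \<C> \<Longrightarrow> B \<in> \<C> \<Longrightarrow> A \<subseteq> B \<Longrightarrow> A = B" using m unfolding matroid_def by blast
  have bin: "\<And>A B. A \<in> \<C> \<Longrightarrow> B \<in> \<C> \<Longrightarrow> \<exists>\<D>\<subseteq>\<C>. pairwise disjnt \<D> \<and> \<Union>\<D> = (A \<union> B) - (A \<inter> B)"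
    using b unfolding binary_matroid_def by blast
  have finC: "\<And>A. A \<in> \<C> \<Longrightarrow> finite A" using CS fS finite_subset by blast
  have lst: "\<exists>as. set as = \<A> \<and> distinct as" if "\<A> \<subseteq> \<C>" for \<A>
  proof -
    have "finite \<C>" using CS fS by (meson finite_Pow_iff finite_subset)
    then have "finite \<A>" using that finite_subset by blast
    then show ?thesis using finite_distinct_list by blast
  qed
  show "set L \<subseteq> \<C> \<Longrightarrow> \<exists>\<D>\<subseteq>\<C>. pairwise disjnt \<D> \<and> \<Union>\<D> = xf L"
  proof (cases "{} \<in> \<C>")
    case True
    then have allE: "\<And>K. K \<in> \<C> \<Longrightarrow> K = {}" using I by blast
    show "set L \<subseteq> \<C> \<Longrightarrow> \<exists>\<D>\<subseteq>\<C>. pairwise disjnt \<D> \<and> \<Union>\<D> = xf L"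
    proof -
      assume "set L \<subseteq> \<C>"
      then have "xf L = {}" using allE by (induction L) auto
      then show "\<exists>\<D>\<subseteq>\<C>. pairwise disjnt \<D> \<and> \<Union>\<D> = xf L" by (intro exI[of _ "{}"]) auto
    qed
  next
    case False
    show "set L \<subseteq> \<C> \<Longrightarrow> \<exists>\<D>\<subseteq>\<C>. pairwise disjnt \<D> \<and> \<Union>\<D> = xf L"
    proof (induction "sum_list (map card L)" arbitrary: L rule: less_induct)
      case (less L)
      show ?case
      proof (cases L)
        case Nil then show ?thesis by (intro exI[of _ "{}"]) auto
      next
        case (Cons C L')
        have C: "C \<in> \<C>" and L': "set L' \<subseteq> \<C>" using less.prems Cons by auto
        have "C \<noteq> {}" using C False by auto
        then have "card C > 0" using finC[OF C] by auto
        then have "sum_list (map card L') < sum_list (map card L)" using Cons by simp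
        from less.hyps[OF this L'] obtain \<B> where B: "\<B> \<subseteq> \<C>" "pairwise disjnt \<B>" "\<Union>\<B> = xf L'"
          by blast
        show ?thesis
        proof (cases "\<forall>D\<in>\<B>. C \<inter> D = {}")
          case True
          have "pairwise disjnt (insert C \<B>)" using B(2) True
            unfolding pairwise_def disjnt_def by blast
          moreover have "\<Union>(insert C \<B>) = xf L"
            using True B(3) Cons by (auto simp: sd_def)
          ultimately show ?thesis using B(1) C by (intro exI[of _ "insert C \<B>"]) auto
        next
          case False
          then obtain D where D: "D \<in> \<B>" "C \<inter> D \<noteq> {}" by blast
          have DC: "D \<in> \<C>" using D B by auto
          obtain \<D>0 where D0: "\<D>0 \<subseteq> \<C>" "pairwise disjnt \<D>0" "\<Union>\<D>0 = (C \<union> D) - (C \<inter> D)"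
            using bin[OF C DC] by blast
          obtain ds0 where ds0: "set ds0 = \<D>0" "distinct ds0" using lst[OF D0(1)] by blast
          obtain ds1 where ds1: "set ds1 = \<B> - {D}" "distinct ds1" using lst[of "\<B> - {D}"] B(1) by blast
          have pB1: "pairwise disjnt (\<B> - {D})" using B(2) pairwise_subset by blast
          have fin0: "\<forall>A\<in>set ds0. finite A" using ds0(1) D0(1) finC by blast
          have fin1: "\<forall>A\<in>set ds1. finite A" using ds1(1) B(1) finC by blast
          have "xf ds0 = \<Union>\<D>0" using xf_disj_list[OF ds0(2)] ds0(1) D0(2) by simp
          moreover have "(C \<union> D) - (C \<inter> D) = sd C D" unfolding sd_def by blast
          ultimately have x0: "xf ds0 = sd C D" using D0(3) by simp
          have x1: "xf ds1 = \<Union>(\<B> - {D})" using xf_disj_list[OF ds1(2)] ds1(1) pB1 by simp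
          have s0: "sum_list (map card ds0) = card (sd C D)"
            using sum_disj_list[OF ds0(2)] ds0(1) D0(2) fin0 x0 xf_disj_list[OF ds0(2)] by simp
          have s1: "sum_list (map card ds1) = card (\<Union>(\<B> - {D}))"
            using sum_disj_list[OF ds1(2)] ds1(1) pB1 fin1 by simp
          have Ddisj: "D \<inter> \<Union>(\<B> - {D}) = {}" using B(2) D(1) unfolding pairwise_def disjnt_def by blast
          have UB: "\<Union>\<B> = D \<union> \<Union>(\<B> - {D})" using D(1) by blast
          have "finite (\<Union>(set ds1))" using fin1 by (intro finite_Union) simp_all
          then have finD: "finite D" "finite (\<Union>(\<B> - {D}))" using finC[OF DC] ds1(1) by simp_all
          have "card (\<Union>\<B>) = card (D \<union> \<Union>(\<B> - {D}))" using UB by (rule arg_cong)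
          also have "\<dots> = card D + card (\<Union>(\<B> - {D}))" by (rule card_Un_disjoint[OF finD Ddisj])
          finally have cardB: "card (\<Union>\<B>) = card D + card (\<Union>(\<B> - {D}))" .
          have sdc: "card (sd C D) + 2 * card (C \<inter> D) = card C + card D"
            by (rule sd_card[OF finC[OF C] finC[OF DC]])
          have "finite (C \<inter> D)" using finC[OF C] by simp
          then have pos: "card (C \<inter> D) > 0" using D(2) by (simp add: card_gt_0_iff)
          from sdc pos have ltCD: "card (sd C D) < card C + card D" by linarith
          have "card (xf L') \<le> sum_list (map card L')" by (rule card_xf) (use L' finC in blast)
          then have leB: "card (\<Union>\<B>) \<le> sum_list (map card L')" using B(3) by simp
          have e1: "sum_list (map card (ds0 @ ds1)) = card (sd C D) + card (\<Union>(\<B> - {D}))" using s0 s1 by simp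
          have e2: "sum_list (map card L) = card C + sum_list (map card L')" using Cons by simp
          have ltS: "sum_list (map card (ds0 @ ds1)) < sum_list (map card L)"
            using e1 e2 leB cardB ltCD by linarith
          have subS: "set (ds0 @ ds1) \<subseteq> \<C>" unfolding set_append ds0(1) ds1(1) using D0(1) B(1) by blast
          from less.hyps[OF ltS subS] obtain \<D> where R: "\<D> \<subseteq> \<C>" "pairwise disjnt \<D>" "\<Union>\<D> = xf (ds0 @ ds1)"
            by blast
          have "xf (ds0 @ ds1) = sd (sd C D) (\<Union>(\<B> - {D}))" by (simp add: xf_append x0 x1)
          also have "\<dots> = sd C (sd D (\<Union>(\<B> - {D})))" by (simp add: sd_assoc)
          also have "sd D (\<Union>(\<B> - {D})) = \<Union>\<B>" using sd_disj[OF Ddisj] UB by simp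
          also have "sd C (\<Union>\<B>) = xf L" using B(3) Cons by simp
          finally have "\<Union>\<D> = xf L" using R(3) by simp
          then show ?thesis using R(1,2) by blast
        qed
      qed
    qed
  qed
qed


lemma img_sd: "inj_on f E \<Longrightarrow> A \<subseteq> E \<Longrightarrow> B \<subseteq> E \<Longrightarrow> f ` (sd A B) = sd (f ` A) (f ` B)"
  unfolding sd_def inj_on_def by blast

lemma img_xf: "inj_on f E \<Longrightarrow> set L \<subseteq> Pow E \<Longrightarrow> f ` (xf L) = xf (map ((`) f) L)"
proof (induction L)
  case Nil then show ?case by simp
next
  case (Cons A L)
  have "xf L \<subseteq> E" using Cons.prems xf_sub by auto
  then show ?case using Cons img_sd[of f E A "xf L"] by simp
qed

lemma xf_even: "set L \<subseteq> graph_circuits V E \<Longrightarrow> finite E \<Longrightarrow> odds W (xf L) = {}"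
proof (induction L)
  case Nil then show ?case by (simp add: odds_def dg_def)
next
  case (Cons C L)
  have CE: "C \<subseteq> E" using Cons.prems gc_sub by auto
  have "xf L \<subseteq> E" using Cons.prems gc_sub xf_sub[of L E] by auto
  then have "finite C" "finite (xf L)" using CE Cons.prems finite_subset by auto
  then have "odds W (sd C (xf L)) = sd (odds W C) (odds W (xf L))" by (rule odds_sd)
  moreover have "odds W C = {}" using Cons.prems gc_even[of C V E W] by auto
  moreover have "odds W (xf L) = {}" using Cons by auto
  ultimately show ?case by simp
qed

lemma card_le1: "finite A \<Longrightarrow> card A \<le> 1 \<Longrightarrow> A = {} \<or> (\<exists>e. A = {e})"
proof -
  assume f: "finite A" and c: "card A \<le> 1"
  show ?thesis
  proof (cases "A = {}")
    case False
    then obtain a where a: "a \<in> A" by blast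
    have "\<forall>x\<in>A. \<forall>y\<in>A. x = y" using c card_le_Suc0_iff_eq[OF f] by simp
    then have "A = {a}" using a by blast
    then show ?thesis by blast
  qed simp
qed

lemma core_v:
  assumes g: "simple_graph V E" and bm: "binary_matroid S \<C>" and ci: "circuit_injection V E f S \<C>"
    and c: "is_cycle V E hs" and cov: "V - {v} \<subseteq> set hs" and vV: "v \<in> V"
    and D: "D \<subseteq> E" and fD: "f ` D \<in> \<C>"
  shows "odds V D = {} \<or> (v \<notin> set hs \<and> v \<in> odds V D)"
proof -
  have bij: "bij_betw f E S" and gcC: "\<forall>C\<in>graph_circuits V E. f ` C \<in> \<C>"
    using ci unfolding circuit_injection_def by auto
  have inj: "inj_on f E" and SfE: "S = f ` E" using bij unfolding bij_betw_def by auto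
  have fE: "finite E" by (rule graph_finite[OF g])
  have fS: "finite S" using SfE fE by simp
  have m: "matroid S \<C>" using bm unfolding binary_matroid_def by auto
  have I: "\<And>A B. A \<in> \<C> \<Longrightarrow> B \<in> \<C> \<Longrightarrow> A \<subseteq> B \<Longrightarrow> A = B" using m unfolding matroid_def by blast
  define H where "H = cycle_edges hs"
  have HE: "H \<subseteq> E" unfolding H_def by (rule cyc_E[OF c])
  have Hgc: "H \<in> graph_circuits V E" unfolding H_def graph_circuits_def using c by blast
  obtain L where L: "set L \<subseteq> graph_circuits V E"
      "sd D (xf L) - H \<subseteq> {e. v \<in> e \<and> v \<notin> set hs}" "card (sd D (xf L) - H) \<le> 1"
    using reduce[OF g c cov D] unfolding H_def by blast
  define X where "X = sd D (xf L)"
  have LE: "set L \<subseteq> Pow E" using L(1) gc_sub by blast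
  have xLE: "xf L \<subseteq> E" using xf_sub[OF LE] .
  have XE: "X \<subseteq> E" unfolding X_def using D xLE by (auto simp: sd_def)
  have fX: "f ` X = xf (map ((`) f) (D # L))"
    using img_xf[OF inj, of "D # L"] LE D unfolding X_def by simp
  have "set (map ((`) f) (D # L)) \<subseteq> \<C>" using fD L(1) gcC by auto
  from binary_xf[OF bm fS this] obtain \<D> where DD0: "\<D> \<subseteq> \<C>" "pairwise disjnt \<D>" "\<Union>\<D> = xf (map ((`) f) (D # L))"
    by blast
  have DD: "\<D> \<subseteq> \<C>" "pairwise disjnt \<D>" "\<Union>\<D> = f ` X" using DD0 fX by simp_all
  have oX: "odds V X = odds V D"
  proof -
    have "finite D" "finite (xf L)" using D xLE fE finite_subset by auto
    then have "odds V X = sd (odds V D) (odds V (xf L))" unfolding X_def by (rule odds_sd)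
    moreover have "odds V (xf L) = {}" by (rule xf_even[OF L(1) fE])
    ultimately show ?thesis by simp
  qed
  have fX_: "finite (X - H)" using XE fE finite_subset by blast
  have "X - H = {} \<or> (\<exists>e. X - H = {e})"
    using card_le1[OF fX_] L(3) unfolding X_def by blast
  then show ?thesis
  proof
    assume "X - H = {}"
    then have XH: "X \<subseteq> H" by blast
    have fHC: "f ` H \<in> \<C>" using gcC Hgc by blast
    have "\<forall>K\<in>\<D>. K = f ` H"
    proof
      fix K assume K: "K \<in> \<D>"
      then have "K \<subseteq> f ` H" using DD(3) XH by blast
      then show "K = f ` H" using I[OF _ fHC] K DD(1) by blast
    qed
    then have "\<D> \<subseteq> {f ` H}" by blast
    then have "\<D> = {} \<or> \<D> = {f ` H}" by (rule subset_singletonD)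
    then have "f ` X = {} \<or> f ` X = f ` H"
    proof
      assume "\<D> = {}" then show ?thesis using DD(3) by simp
    next
      assume "\<D> = {f ` H}" then show ?thesis using DD(3) by simp
    qed
    then have "X = {} \<or> X = H"
    proof
      assume "f ` X = f ` H"
      then have "X = H" using inj_on_image_eq_iff[OF inj XE HE] by simp
      then show ?thesis by simp
    qed simp
    then have "odds V X = {}"
    proof
      assume "X = H"
      then show ?thesis using cyc_even[OF c] unfolding H_def by simp
    qed (simp add: odds_def dg_def)
    then show ?thesis using oX by simp
  next
    assume "\<exists>e. X - H = {e}"
    then obtain e where e: "X - H = {e}" by blast
    then have ve: "v \<in> e" "v \<notin> set hs" using L(2) unfolding X_def by auto
    have "{e' \<in> X. v \<in> e'} = {e}"
    proof
      show "{e} \<subseteq> {e' \<in> X. v \<in> e'}" using e ve by auto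
      show "{e' \<in> X. v \<in> e'} \<subseteq> {e}"
      proof
        fix e' assume e': "e' \<in> {e' \<in> X. v \<in> e'}"
        have "e' \<notin> H"
        proof
          assume "e' \<in> H"
          then have "e' \<subseteq> set hs" unfolding H_def by (rule cyc_edge_sub)
          then show False using e' ve by auto
        qed
        then show "e' \<in> {e}" using e e' by blast
      qed
    qed
    then have "dg X v = 1" unfolding dg_def by simp
    then have "v \<in> odds V X" using vV unfolding odds_def by simp
    then show ?thesis using oX ve by simp
  qed
qed


lemma finish:
  assumes g: "simple_graph V E" and bm: "binary_matroid S \<C>" and ci: "circuit_injection V E f S \<C>"
    and c: "is_cycle V E hs0"
    and ev: "\<And>D. D \<subseteq> E \<Longrightarrow> f ` D \<in> \<C> \<Longrightarrow> odds V D = {}"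
  shows "\<not> nontrivial_circuit_injection V E f S \<C>"
proof -
  have bij: "bij_betw f E S" and gcC: "\<forall>C\<in>graph_circuits V E. f ` C \<in> \<C>"
    using ci unfolding circuit_injection_def by auto
  have inj: "inj_on f E" and SfE: "S = f ` E" using bij unfolding bij_betw_def by auto
  have m: "matroid S \<C>" using bm unfolding binary_matroid_def by auto
  have I: "\<And>A B. A \<in> \<C> \<Longrightarrow> B \<in> \<C> \<Longrightarrow> A \<subseteq> B \<Longrightarrow> A = B" using m unfolding matroid_def by blast
  have CS: "\<C> \<subseteq> Pow S" using m unfolding matroid_def by auto
  have "\<forall>K\<in>\<C>. \<exists>C\<in>graph_circuits V E. f ` C = K"
  proof
    fix K assume K: "K \<in> \<C>"
    define D where "D = {e \<in> E. f e \<in> K}"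
    have DE: "D \<subseteq> E" unfolding D_def by auto
    have KS: "K \<subseteq> f ` E" using K CS SfE by auto
    have fD: "f ` D = K"
    proof
      show "f ` D \<subseteq> K" unfolding D_def by auto
      show "K \<subseteq> f ` D"
      proof
        fix k assume "k \<in> K"
        then obtain e where "e \<in> E" "k = f e" using KS by auto
        then show "k \<in> f ` D" unfolding D_def using \<open>k \<in> K\<close> by auto
      qed
    qed
    have oD: "odds V D = {}" using ev[OF DE] fD K by simp
    have H0: "cycle_edges hs0 \<in> graph_circuits V E" unfolding graph_circuits_def using c by blast
    have "D \<noteq> {}"
    proof
      assume "D = {}"
      then have "K = {}" using fD by simp
      then have "K \<subseteq> f ` cycle_edges hs0" by simp
      then have "K = f ` cycle_edges hs0" using I[OF K] gcC H0 by blast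
      then show False using cyc_nonempty[OF c] \<open>K = {}\<close> by simp
    qed
    moreover have "\<forall>u\<in>V. even (dg D u)" using oD unfolding odds_def by auto
    ultimately obtain vs where vs: "is_cycle V E vs" "cycle_edges vs \<subseteq> D"
      using find_cycle[OF g DE] by blast
    have Cg: "cycle_edges vs \<in> graph_circuits V E" unfolding graph_circuits_def using vs by blast
    then have "f ` cycle_edges vs \<in> \<C>" using gcC by blast
    moreover have "f ` cycle_edges vs \<subseteq> K" using vs(2) fD by blast
    ultimately have "f ` cycle_edges vs = K" using I K by blast
    then show "\<exists>C\<in>graph_circuits V E. f ` C = K" using Cg by blast
  qed
  then show ?thesis unfolding nontrivial_circuit_injection_def by blast
qed

lemma ham_none:
  fixes V :: "'v set"
  assumes g: "simple_graph V E" and h: "hamiltonian V E" and V: "V \<noteq> {}"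
  shows "\<not> (\<exists>(S :: 'c set) \<C> (f :: 'v set \<Rightarrow> 'c). binary_matroid S \<C> \<and> nontrivial_circuit_injection V E f S \<C>)"
proof
  assume "\<exists>(S :: 'c set) \<C> (f :: 'v set \<Rightarrow> 'c). binary_matroid S \<C> \<and> nontrivial_circuit_injection V E f S \<C>"
  then obtain S :: "'c set" and \<C> and f :: "'v set \<Rightarrow> 'c" where bm: "binary_matroid S \<C>" and nt: "nontrivial_circuit_injection V E f S \<C>"
    by blast
  have ci: "circuit_injection V E f S \<C>" using nt unfolding nontrivial_circuit_injection_def by auto
  obtain hs where hs: "is_cycle V E hs" "set hs = V" using h unfolding hamiltonian_def by blast
  obtain v where v: "v \<in> V" using V by blast
  have cov: "V - {v} \<subseteq> set hs" using hs by auto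
  have "odds V D = {}" if "D \<subseteq> E" "f ` D \<in> \<C>" for D
    using core_v[OF g bm ci hs(1) cov v that] hs v by auto
  then have "\<not> nontrivial_circuit_injection V E f S \<C>" using finish[OF g bm ci hs(1)] by blast
  then show False using nt by simp
qed

lemma almost_none:
  fixes V :: "'v set"
  assumes g: "simple_graph V E" and h: "almost_hamiltonian V E" and V: "V \<noteq> {}"
    and od: "odd (card V)"
  shows "\<not> (\<exists>(S :: 'c set) \<C> (f :: 'v set \<Rightarrow> 'c). binary_matroid S \<C> \<and> nontrivial_circuit_injection V E f S \<C>)"
proof
  assume "\<exists>(S :: 'c set) \<C> (f :: 'v set \<Rightarrow> 'c). binary_matroid S \<C> \<and> nontrivial_circuit_injection V E f S \<C>"
  then obtain S :: "'c set" and \<C> and f :: "'v set \<Rightarrow> 'c" where bm: "binary_matroid S \<C>" and nt: "nontrivial_circuit_injection V E f S \<C>"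
    by blast
  have ci: "circuit_injection V E f S \<C>" using nt unfolding nontrivial_circuit_injection_def by auto
  have fV: "finite V" using g unfolding simple_graph_def by auto
  have cyv: "\<exists>hs. is_cycle V E hs \<and> V - {v} \<subseteq> set hs" if v: "v \<in> V" for v
  proof -
    have "card (V - {v}) = card V - 1" using v fV by simp
    then show ?thesis using h unfolding almost_hamiltonian_def by blast
  qed
  obtain v0 where v0: "v0 \<in> V" using V by blast
  obtain hs0 where hs0: "is_cycle V E hs0" using cyv[OF v0] by blast
  have "odds V D = {}" if D: "D \<subseteq> E" "f ` D \<in> \<C>" for D
  proof (rule ccontr)
    assume ne: "odds V D \<noteq> {}"
    have "V \<subseteq> odds V D"
    proof
      fix v assume v: "v \<in> V"
      obtain hs where hs: "is_cycle V E hs" "V - {v} \<subseteq> set hs" using cyv[OF v] by blast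
      show "v \<in> odds V D" using core_v[OF g bm ci hs v D] ne by auto
    qed
    then have "odds V D = V" unfolding odds_def by auto
    moreover have "even (card (odds V D))" by (rule handshake[OF g D(1)])
    ultimately show False using od by simp
  qed
  then have "\<not> nontrivial_circuit_injection V E f S \<C>" using finish[OF g bm ci hs0] by blast
  then show False using nt by simp
qed



definition minc :: "'a set set \<Rightarrow> 'a set set" where
  "minc Z = {D \<in> Z. D \<noteq> {} \<and> (\<forall>D'\<in>Z. D' \<subseteq> D \<longrightarrow> D' = {} \<or> D' = D)}"

lemma min_decomp:
  assumes fE: "finite E" and ZE: "Z \<subseteq> Pow E" and cl: "\<forall>A\<in>Z. \<forall>B\<in>Z. sd A B \<in> Z"
  shows "y \<in> Z \<Longrightarrow> \<exists>\<D>\<subseteq>minc Z. pairwise disjnt \<D> \<and> \<Union>\<D> = y"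
proof (induction "card y" arbitrary: y rule: less_induct)
  case (less y)
  show ?case
  proof (cases "y = {}")
    case True then show ?thesis by (intro exI[of _ "{}"]) auto
  next
    case False
    define M where "M = {D \<in> Z. D \<noteq> {} \<and> D \<subseteq> y}"
    have "y \<in> M" using less.prems False unfolding M_def by auto
    then obtain D where D: "D \<in> M" and Dmin: "\<forall>D'. D' \<in> M \<longrightarrow> card D \<le> card D'"
      using ex_has_least_nat[of "\<lambda>D. D \<in> M" y card] by blast
    have fy: "finite y" using less.prems ZE fE finite_subset by blast
    have DZ: "D \<in> Z" and Dne: "D \<noteq> {}" and Dy: "D \<subseteq> y" using D unfolding M_def by auto
    have fD: "finite D" using Dy fy finite_subset by blast
    have DC: "D \<in> minc Z" unfolding minc_def
    proof (intro CollectI conjI ballI impI DZ Dne)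
      fix D' assume D': "D' \<in> Z" "D' \<subseteq> D"
      show "D' = {} \<or> D' = D"
      proof (cases "D' = {}")
        case False
        then have "D' \<in> M" using D' Dy unfolding M_def by auto
        then have "card D \<le> card D'" using Dmin by blast
        then have "D' = D" using card_seteq[OF fD D'(2)] by blast
        then show ?thesis by blast
      qed simp
    qed
    have eq: "sd y D = y - D" using Dy unfolding sd_def by blast
    have "sd y D \<in> Z" using cl less.prems DZ by blast
    then have y'Z: "y - D \<in> Z" using eq by simp
    have "y - D \<subset> y" using Dy Dne by blast
    then have lt: "card (y - D) < card y" using fy by (rule psubset_card_mono[rotated])
    from less.hyps[OF lt y'Z] obtain \<D>' where D': "\<D>' \<subseteq> minc Z" "pairwise disjnt \<D>'" "\<Union>\<D>' = y - D"
      by blast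
    have "pairwise disjnt (insert D \<D>')"
    proof -
      have "\<forall>Y\<in>\<D>'. disjnt D Y \<and> disjnt Y D"
      proof
        fix Y assume "Y \<in> \<D>'"
        then have "Y \<subseteq> y - D" using D'(3) by blast
        then show "disjnt D Y \<and> disjnt Y D" unfolding disjnt_def by blast
      qed
      then show ?thesis using D'(2) by (simp add: pairwise_insert)
    qed
    moreover have "\<Union>(insert D \<D>') = y" using D'(3) Dy by auto
    moreover have "insert D \<D>' \<subseteq> minc Z" using DC D'(1) by simp
    ultimately show ?thesis by blast
  qed
qed



lemma minc_D: "A \<in> minc Z \<Longrightarrow> A \<in> Z \<and> A \<noteq> {} \<and> (\<forall>D'\<in>Z. D' \<subseteq> A \<longrightarrow> D' = {} \<or> D' = A)"
  unfolding minc_def by simp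

lemma minc_I: "A \<in> minc Z \<Longrightarrow> B \<in> minc Z \<Longrightarrow> A \<subseteq> B \<Longrightarrow> A = B"
proof -
  assume A: "A \<in> minc Z" and B: "B \<in> minc Z" and AB: "A \<subseteq> B"
  have AZ: "A \<in> Z" and An: "A \<noteq> {}" using minc_D[OF A] by auto
  have "\<forall>D'\<in>Z. D' \<subseteq> B \<longrightarrow> D' = {} \<or> D' = B" using minc_D[OF B] by auto
  then have "A = {} \<or> A = B" using AZ AB by blast
  then show "A = B" using An by blast
qed

lemma min_binary:
  assumes fE: "finite E" and En: "E \<noteq> {}" and ZE: "Z \<subseteq> Pow E"
    and cl: "\<forall>A\<in>Z. \<forall>B\<in>Z. sd A B \<in> Z"
  shows "binary_matroid E (minc Z)"
proof -
  note dec = min_decomp[OF fE ZE cl]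
  have sdZ: "(A \<union> B) - (A \<inter> B) \<in> Z" if A: "A \<in> minc Z" and B: "B \<in> minc Z" for A B
  proof -
    have "A \<in> Z" "B \<in> Z" using minc_D[OF A] minc_D[OF B] by auto
    then have "sd A B \<in> Z" using cl by blast
    moreover have "sd A B = (A \<union> B) - (A \<inter> B)" unfolding sd_def by blast
    ultimately show ?thesis by simp
  qed
  have CP: "minc Z \<subseteq> Pow E" using ZE unfolding minc_def by auto
  have II: "\<forall>A\<in>minc Z. \<forall>B\<in>minc Z. \<forall>a\<in>A \<inter> B. \<forall>b\<in>(A \<union> B) - (A \<inter> B).
        \<exists>D\<in>minc Z. D \<subseteq> A \<union> B \<and> a \<notin> D \<and> b \<in> D"
  proof (intro ballI)
    fix A B a b assume A: "A \<in> minc Z" and B: "B \<in> minc Z" and a: "a \<in> A \<inter> B"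
      and b: "b \<in> (A \<union> B) - (A \<inter> B)"
    obtain \<D> where D: "\<D> \<subseteq> minc Z" "\<Union>\<D> = (A \<union> B) - (A \<inter> B)"
      using dec[OF sdZ[OF A B]] by blast
    then obtain D where D1: "D \<in> \<D>" "b \<in> D" using b by blast
    then have "D \<in> minc Z" "D \<subseteq> (A \<union> B) - (A \<inter> B)" using D by auto
    then show "\<exists>D\<in>minc Z. D \<subseteq> A \<union> B \<and> a \<notin> D \<and> b \<in> D" using D1(2) a by blast
  qed
  have I: "\<forall>A\<in>minc Z. \<forall>B\<in>minc Z. A \<subseteq> B \<longrightarrow> A = B"
    using minc_I by blast
  have m: "matroid E (minc Z)"
    unfolding matroid_def by (intro conjI En CP I II)
  have "\<forall>A\<in>minc Z. \<forall>B\<in>minc Z. \<exists>\<D>\<subseteq>minc Z. pairwise disjnt \<D> \<and> \<Union>\<D> = (A \<union> B) - (A \<inter> B)"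
  proof (intro ballI)
    fix A B assume A: "A \<in> minc Z" and B: "B \<in> minc Z"
    show "\<exists>\<D>\<subseteq>minc Z. pairwise disjnt \<D> \<and> \<Union>\<D> = (A \<union> B) - (A \<inter> B)"
      by (rule dec[OF sdZ[OF A B]])
  qed
  then show ?thesis unfolding binary_matroid_def using m by (intro conjI)
qed
lemma odds_union:
  "finite \<D> \<Longrightarrow> pairwise disjnt \<D> \<Longrightarrow> \<forall>D\<in>\<D>. finite D \<and> odds V D = {} \<Longrightarrow> odds V (\<Union>\<D>) = {}"
proof (induction \<D> rule: finite_induct)
  case empty then show ?case by (simp add: odds_def dg_def)
next
  case (insert D F)
  have pF: "pairwise disjnt F" using insert.prems(1) by (simp add: pairwise_insert)
  have allF: "\<forall>Y\<in>F. finite Y \<and> odds V Y = {}" using insert.prems(2) by simp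
  have hD: "finite D" "odds V D = {}" using insert.prems(2) by simp_all
  have "\<forall>Y\<in>F. disjnt D Y" using insert.prems(1) insert.hyps(2) by (auto simp: pairwise_insert)
  then have dj: "D \<inter> \<Union>F = {}" unfolding disjnt_def by auto
  have fU: "finite (\<Union>F)" using insert.hyps(1) allF by (intro finite_Union) auto
  have IH: "odds V (\<Union>F) = {}" by (rule insert.IH[OF pF allF])
  have "\<Union>(insert D F) = sd D (\<Union>F)" using sd_disj[OF dj] by simp
  then have "odds V (\<Union>(insert D F)) = sd (odds V D) (odds V (\<Union>F))" using odds_sd[OF hD(1) fU, of V] by simp
  then show ?case using IH hD(2) by simp
qed

lemma construct:
  fixes V :: "'v set" and E :: "'v set set"
  assumes g: "simple_graph V E" and En: "E \<noteq> {}" and xE: "x \<subseteq> E" and T: "odds V x \<noteq> {}"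
    and nc: "\<And>vs. is_cycle V E vs \<Longrightarrow> \<not> odds V x \<subseteq> set vs"
  shows "\<exists>(S :: 'v set set) \<C> f. binary_matroid S \<C> \<and> nontrivial_circuit_injection V E f S \<C>"
proof -
  define T where "T = odds V x"
  define Z where "Z = {y. y \<subseteq> E \<and> (odds V y = {} \<or> odds V y = T)}"
  have fE: "finite E" by (rule graph_finite[OF g])
  have ZE: "Z \<subseteq> Pow E" unfolding Z_def by auto
  have cl: "\<forall>A\<in>Z. \<forall>B\<in>Z. sd A B \<in> Z"
  proof (intro ballI)
    fix A B assume A: "A \<in> Z" and B: "B \<in> Z"
    have AE: "A \<subseteq> E" "B \<subseteq> E" using A B unfolding Z_def by auto
    then have "finite A" "finite B" using fE finite_subset by auto
    then have o: "odds V (sd A B) = sd (odds V A) (odds V B)" by (rule odds_sd)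
    have "odds V A = {} \<or> odds V A = T" "odds V B = {} \<or> odds V B = T" using A B unfolding Z_def by auto
    then have "odds V (sd A B) = {} \<or> odds V (sd A B) = T" unfolding o by auto
    moreover have "sd A B \<subseteq> E" using AE unfolding sd_def by blast
    ultimately show "sd A B \<in> Z" unfolding Z_def by blast
  qed
  have bm: "binary_matroid E (minc Z)" by (rule min_binary[OF fE En ZE cl])
  have gcC: "\<forall>C\<in>graph_circuits V E. id ` C \<in> minc Z"
  proof
    fix C assume "C \<in> graph_circuits V E"
    then obtain vs where vs: "is_cycle V E vs" "C = cycle_edges vs" unfolding graph_circuits_def by blast
    have CE: "C \<subseteq> E" using cyc_E[OF vs(1)] vs(2) by simp
    have oC: "odds V C = {}" using cyc_even[OF vs(1)] vs(2) by simp
    have CZ: "C \<in> Z" unfolding Z_def using CE oC by simp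
    have Cne: "C \<noteq> {}" using cyc_nonempty[OF vs(1)] vs(2) by simp
    have "\<forall>D'\<in>Z. D' \<subseteq> C \<longrightarrow> D' = {} \<or> D' = C"
    proof (intro ballI impI)
      fix D' assume D': "D' \<in> Z" "D' \<subseteq> C"
      have "odds V D' \<subseteq> set vs" using cyc_odds_sub D'(2) vs(2) by blast
      then have "odds V D' \<noteq> T" using nc[OF vs(1)] unfolding T_def by blast
      then have oD: "odds V D' = {}" using D'(1) unfolding Z_def by auto
      show "D' = {} \<or> D' = C"
      proof (cases "D' = {}")
        case False
        have sv: "set vs \<subseteq> V" using vs(1) unfolding is_cycle_def by auto
        have "\<forall>u\<in>set vs. even (dg D' u)" using oD sv unfolding odds_def by auto
        then have "D' = cycle_edges vs" using cyc_minimal[OF vs(1)] D'(2) vs(2) False by blast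
        then show ?thesis using vs(2) by simp
      qed simp
    qed
    then show "id ` C \<in> minc Z" unfolding minc_def using CZ Cne by simp
  qed
  have ci: "circuit_injection V E id E (minc Z)"
    unfolding circuit_injection_def using gcC by (simp add: bij_betw_id)
  have xZ: "x \<in> Z" unfolding Z_def T_def using xE by simp
  obtain \<D> where D: "\<D> \<subseteq> minc Z" "pairwise disjnt \<D>" "\<Union>\<D> = x"
    using min_decomp[OF fE ZE cl xZ] by blast
  have "\<exists>D\<in>\<D>. \<forall>C\<in>graph_circuits V E. id ` C \<noteq> D"
  proof (rule ccontr)
    assume "\<not> ?thesis"
    then have allg: "\<forall>D\<in>\<D>. \<exists>C\<in>graph_circuits V E. C = D" by simp
    have "finite (Pow E)" using fE by simp
    moreover have "\<D> \<subseteq> Pow E" using D(1) ZE unfolding minc_def by blast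
    ultimately have fD: "finite \<D>" by (rule finite_subset[rotated])
    have "\<forall>D\<in>\<D>. finite D \<and> odds V D = {}"
    proof
      fix D assume "D \<in> \<D>"
      then obtain C where "C \<in> graph_circuits V E" "C = D" using allg by blast
      then show "finite D \<and> odds V D = {}" using gc_even[of C V E V] gc_sub[of C V E] fE finite_subset by blast
    qed
    then have "odds V (\<Union>\<D>) = {}" using odds_union[OF fD D(2)] by blast
    then show False using D(3) T by simp
  qed
  then have "nontrivial_circuit_injection V E id E (minc Z)"
    unfolding nontrivial_circuit_injection_def using ci D(1) by blast
  then show ?thesis using bm by blast
qed


lemma odds_single_edge:
  assumes g: "simple_graph V E" and e: "{b, c} \<in> E"
  shows "odds V {{b, c}} = sd {b} {c}"
proof -
  have bc: "b \<noteq> c" "b \<in> V" "c \<in> V" using edge_card[OF g e] by (auto simp: card_2_iff)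
  have "{e \<in> {{b, c}}. u \<in> e} = (if u \<in> {b, c} then {{b, c}} else {})" for u by auto
  then have "dg {{b, c}} u = (if u \<in> {b, c} then 1 else 0)" for u
    unfolding dg_def by simp
  then have "odds V {{b, c}} = {b, c}" using bc unfolding odds_def by auto
  moreover have "sd {b} {c} = {b, c}" using bc unfolding sd_def by auto
  ultimately show ?thesis by simp
qed

lemma path_join:
  assumes g: "simple_graph V E"
  shows "(adj E)\<^sup>*\<^sup>* r a \<Longrightarrow> \<exists>J\<subseteq>E. odds V J = sd {r} {a}"
proof (induction rule: rtranclp_induct)
  case base
  show ?case by (intro exI[of _ "{}"]) (simp add: odds_def dg_def)
next
  case (step b c)
  obtain J where J: "J \<subseteq> E" "odds V J = sd {r} {b}" using step.IH by blast
  have fE: "finite E" by (rule graph_finite[OF g])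
  have "finite J" "finite {{b, c}}" using J fE finite_subset by auto
  then have "odds V (sd J {{b, c}}) = sd (odds V J) (odds V {{b, c}})" by (rule odds_sd)
  also have "\<dots> = sd (sd {r} {b}) (sd {b} {c})" using J odds_single_edge[OF g step.hyps(2)] by simp
  also have "\<dots> = sd {r} {c}" by (simp add: sd_assoc[symmetric]) (simp add: sd_assoc)
  finally have "odds V (sd J {{b, c}}) = sd {r} {c}" .
  moreover have "sd J {{b, c}} \<subseteq> E" using J step.hyps(2) unfolding sd_def by auto
  ultimately show ?case by blast
qed

lemma T_join:
  assumes g: "simple_graph V E" and con: "\<forall>a\<in>V. \<forall>b\<in>V. (adj E)\<^sup>*\<^sup>* a b" and r: "r \<in> V"
  shows "finite T \<Longrightarrow> T \<subseteq> V \<Longrightarrow> \<exists>x\<subseteq>E. odds V x = (if even (card T) then T else sd T {r})"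
proof (induction T rule: finite_induct)
  case empty
  show ?case by (intro exI[of _ "{}"]) (simp add: odds_def dg_def)
next
  case (insert t F)
  obtain x where x: "x \<subseteq> E" "odds V x = (if even (card F) then F else sd F {r})"
    using insert by auto
  have "t \<in> V" using insert.prems by auto
  then have "(adj E)\<^sup>*\<^sup>* r t" using con r by blast
  from path_join[OF g this] obtain J where J: "J \<subseteq> E" "odds V J = sd {r} {t}" by blast
  have fE: "finite E" by (rule graph_finite[OF g])
  have "finite x" "finite J" using finite_subset[OF x(1) fE] finite_subset[OF J(1) fE] by auto
  then have "odds V (sd x J) = sd (odds V x) (odds V J)" by (rule odds_sd)
  then have o: "odds V (sd x J) = sd (odds V x) (sd {r} {t})" using J by simp
  have sx: "sd x J \<subseteq> E" using x J unfolding sd_def by auto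
  have ins: "sd F {t} = insert t F" using insert.hyps(2) unfolding sd_def by auto
  have c: "card (insert t F) = Suc (card F)" using insert.hyps by simp
  show ?case
  proof (cases "even (card F)")
    case True
    have "odds V (sd x J) = sd (sd F {t}) {r}"
      using o x True by (simp add: sd_assoc sd_comm[of "{r}"])
    then have "odds V (sd x J) = (if even (card (insert t F)) then insert t F else sd (insert t F) {r})"
      using True c ins by simp
    then show ?thesis using sx by blast
  next
    case False
    have "odds V (sd x J) = sd F (sd (sd {r} {r}) {t})"
      using o x False by (simp only: if_False sd_assoc)
    then have "odds V (sd x J) = sd F {t}" by simp
    then have "odds V (sd x J) = (if even (card (insert t F)) then insert t F else sd (insert t F) {r})"
      using False c ins by simp
    then show ?thesis using sx by blast
  qed
qed

lemma disconnected_construct: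
  fixes V :: "'v set" and E :: "'v set set"
  assumes g: "simple_graph V E" and ni: "no_isolated V E"
    and u: "u \<in> V" and w: "w \<in> V" and nr: "\<not> (adj E)\<^sup>*\<^sup>* u w"
  shows "\<exists>(S :: 'v set set) \<C> f. binary_matroid S \<C> \<and> nontrivial_circuit_injection V E f S \<C>"
proof -
  obtain e1 where e1: "e1 \<in> E" "u \<in> e1" using ni u unfolding no_isolated_def by blast
  obtain e2 where e2: "e2 \<in> E" "w \<in> e2" using ni w unfolding no_isolated_def by blast
  obtain u' where u': "e1 = {u, u'}" using edge_other[OF g e1] by blast
  obtain w' where w': "e2 = {w, w'}" using edge_other[OF g e2] by blast
  have r1: "(adj E)\<^sup>*\<^sup>* u z" if "z \<in> e1" for z
  proof -
    have "z = u \<or> z = u'" using that u' by auto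
    moreover have "(adj E)\<^sup>*\<^sup>* u u'" using e1 u' by auto
    ultimately show ?thesis by auto
  qed
  have r2: "(adj E)\<^sup>*\<^sup>* z w" if "z \<in> e2" for z
  proof -
    have "z = w \<or> z = w'" using that w' by auto
    moreover have "(adj E)\<^sup>*\<^sup>* w' w" using e2 w' by (auto simp: insert_commute)
    ultimately show ?thesis by auto
  qed
  have dj: "e1 \<inter> e2 = {}"
  proof (rule ccontr)
    assume "e1 \<inter> e2 \<noteq> {}"
    then obtain z where "z \<in> e1" "z \<in> e2" by blast
    then have "(adj E)\<^sup>*\<^sup>* u w" using rtranclp_trans[OF r1 r2] by blast
    then show False using nr by simp
  qed
  define x where "x = {e1, e2}"
  have xE: "x \<subseteq> E" unfolding x_def using e1 e2 by auto
  have ux: "u \<in> odds V x"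
  proof -
    have "{e \<in> x. u \<in> e} = {e1}" unfolding x_def using e1 dj by auto
    then show ?thesis using u unfolding odds_def dg_def by simp
  qed
  have wx: "w \<in> odds V x"
  proof -
    have "{e \<in> x. w \<in> e} = {e2}" unfolding x_def using e2 dj by auto
    then show ?thesis using w unfolding odds_def dg_def by simp
  qed
  have En: "E \<noteq> {}" using e1 by auto
  show ?thesis
  proof (rule construct[OF g En xE])
    show "odds V x \<noteq> {}" using ux by auto
    fix vs assume c: "is_cycle V E vs"
    show "\<not> odds V x \<subseteq> set vs"
    proof
      assume "odds V x \<subseteq> set vs"
      then have "u \<in> set vs" "w \<in> set vs" using ux wx by auto
      then have "(adj E)\<^sup>*\<^sup>* u w" by (rule cyc_reach[OF c])
      then show False using nr by simp
    qed
  qed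
qed


theorem theorem2p2:
  fixes V :: "'v set" and E :: "'v set set"
  assumes "simple_graph V E" and "V \<noteq> {}" and "no_isolated V E"
  shows "(even (card V) \<longrightarrow>
            ((\<not> (\<exists>(S :: 'v set set) \<C> f. binary_matroid S \<C> \<and> nontrivial_circuit_injection V E f S \<C>))
             \<longleftrightarrow> hamiltonian V E)) \<and>
         (odd (card V) \<longrightarrow>
            ((\<not> (\<exists>(S :: 'v set set) \<C> f. binary_matroid S \<C> \<and> nontrivial_circuit_injection V E f S \<C>))
             \<longleftrightarrow> almost_hamiltonian V E))"
proof -
  note g = assms(1) and Vne = assms(2) and ni = assms(3)
  have fV: "finite V" using g unfolding simple_graph_def by auto
  obtain v0 where v0: "v0 \<in> V" using Vne by blast
  obtain e0 where e0: "e0 \<in> E" "v0 \<in> e0" using ni v0 unfolding no_isolated_def by blast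
  have En: "E \<noteq> {}" using e0 by auto
  have c2: "card e0 = 2" and eV: "e0 \<subseteq> V" using edge_card[OF g e0(1)] by auto
  have "card e0 \<le> card V" by (rule card_mono[OF fV eV])
  then have cV2: "card V \<ge> 2" using c2 by linarith
  let ?N = "\<exists>(S :: 'v set set) \<C> f. binary_matroid S \<C> \<and> nontrivial_circuit_injection V E f S \<C>"
  have disc: "?N" if "\<not> (\<forall>a\<in>V. \<forall>b\<in>V. (adj E)\<^sup>*\<^sup>* a b)"
  proof -
    from that obtain u w where "u \<in> V" "w \<in> V" "\<not> (adj E)\<^sup>*\<^sup>* u w" by blast
    then show ?N by (rule disconnected_construct[OF g ni])
  qed
  have tj: "?N" if con: "\<forall>a\<in>V. \<forall>b\<in>V. (adj E)\<^sup>*\<^sup>* a b" and T: "T \<subseteq> V" "even (card T)" "T \<noteq> {}"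
    and nc: "\<And>vs. is_cycle V E vs \<Longrightarrow> \<not> T \<subseteq> set vs" for T
  proof -
    have fT: "finite T" using T(1) fV finite_subset by blast
    obtain x where x: "x \<subseteq> E" "odds V x = (if even (card T) then T else sd T {v0})"
      using T_join[OF g con v0 fT T(1)] by blast
    then have ox: "odds V x = T" using T(2) by simp
    show ?N
    proof (rule construct[OF g En x(1)])
      show "odds V x \<noteq> {}" using ox T(3) by simp
      fix vs assume "is_cycle V E vs"
      then show "\<not> odds V x \<subseteq> set vs" using nc ox by simp
    qed
  qed
  show ?thesis
  proof (intro conjI impI)
    assume ev: "even (card V)"
    show "(\<not> ?N) \<longleftrightarrow> hamiltonian V E"
    proof
      assume h: "hamiltonian V E"
      show "\<not> ?N" by (rule ham_none[OF g h Vne])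
    next
      assume nN: "\<not> ?N"
      show "hamiltonian V E"
      proof (rule ccontr)
        assume nh: "\<not> hamiltonian V E"
        have ?N
        proof (cases "\<forall>a\<in>V. \<forall>b\<in>V. (adj E)\<^sup>*\<^sup>* a b")
          case False then show ?thesis by (rule disc)
        next
          case True
          show ?thesis
          proof (rule tj[OF True])
            show "V \<subseteq> V" "even (card V)" "V \<noteq> {}" using ev Vne by auto
            fix vs assume c: "is_cycle V E vs"
            show "\<not> V \<subseteq> set vs"
            proof
              assume "V \<subseteq> set vs"
              moreover have "set vs \<subseteq> V" using c unfolding is_cycle_def by auto
              ultimately have "set vs = V" by blast
              then show False using nh c unfolding hamiltonian_def by blast
            qed
          qed
        qed
        then show False using nN by simp
      qed
    qed
  next
    assume od: "odd (card V)"
    show "(\<not> ?N) \<longleftrightarrow> almost_hamiltonian V E"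
    proof
      assume h: "almost_hamiltonian V E"
      show "\<not> ?N" by (rule almost_none[OF g h Vne od])
    next
      assume nN: "\<not> ?N"
      show "almost_hamiltonian V E"
      proof (rule ccontr)
        assume nh: "\<not> almost_hamiltonian V E"
        then obtain U where U: "U \<subseteq> V" "card U = card V - 1" "\<not> (\<exists>vs. is_cycle V E vs \<and> U \<subseteq> set vs)"
          unfolding almost_hamiltonian_def by blast
        have ?N
        proof (cases "\<forall>a\<in>V. \<forall>b\<in>V. (adj E)\<^sup>*\<^sup>* a b")
          case False then show ?thesis by (rule disc)
        next
          case True
          show ?thesis
          proof (rule tj[OF True U(1)])
            show "even (card U)" using U(2) od cV2 by auto
            show "U \<noteq> {}" using U(2) cV2 by auto
            fix vs assume c: "is_cycle V E vs"
            show "\<not> U \<subseteq> set vs" using U(3) c by blast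
          qed
        qed
        then show False using nN by simp
      qed
    qed
  qed
qed


end
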